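(* For $k>0$ and $\varepsilon\in\mathbb{R}$ consider the initial value problem $$\Delta^3u=-\frac{1}{u^3},\quad u(0)=k,\quad \Delta u(0)=-\varepsilon,\quad \Delta^2u(0)=1,\quad u'(0)=(\Delta u)'(0)=(\Delta^2u)'(0)=0, \tag{P}$$ and let $S_k:=\{\varepsilon>0:\ \text{(P) has a positive entire radial solution}\}$. There exists $k_0>0$ such that for every $k\ge k_0$ the set $S_k$ is nonempty and bounded above, and, writing $\varepsilon_k^*:=\sup S_k$, problem (P) with $\varepsilon=\varepsilon_k^*$ has a positive entire radial solution.
   Context: A radial function on $\mathbb{R}^3$ is written $u(r)$, $r=|x|$; for radial functions $\Delta w=w''+\frac{2}{r}w'$. A positive entire radial solution is a smooth radial function defined and positive on all of $\mathbb{R}^3$ solving the ODE with the given initial data at $r=0$. *)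

theory Defs
  imports "HOL-Analysis.Analysis"
begin

text \<open>A radial function on R^3 is represented by its profile u : real => real,
  extended evenly to the whole real line (u(-r) = u(r)); smoothness of the radial
  function on R^3 corresponds to smoothness of this even profile on R.\<close>

definition smooth_fun :: "(real \<Rightarrow> real) \<Rightarrow> bool" where
  "smooth_fun u \<longleftrightarrow> (\<forall>n x. ((deriv ^^ n) u) differentiable (at x))"

text \<open>Radial Laplacian in R^3: w'' + (2/r) w' for r > 0; at the origin
  (for an even C^2 profile) its value is the limit 3 w''(0).\<close>

definition rlap :: "(real \<Rightarrow> real) \<Rightarrow> real \<Rightarrow> real" where
  "rlap w r = (if r = 0 then 3 * deriv (deriv w) 0
               else deriv (deriv w) r + 2 / r * deriv w r)"

definition pos_entire_radial_sol :: "real \<Rightarrow> real \<Rightarrow> (real \<Rightarrow> real) \<Rightarrow> bool" where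
  "pos_entire_radial_sol k \<epsilon> u \<longleftrightarrow>
     smooth_fun u \<and> (\<forall>r. u (- r) = u r) \<and> (\<forall>r. u r > 0) \<and>
     (\<forall>r>0. rlap (rlap (rlap u)) r = - 1 / (u r) ^ 3) \<and>
     u 0 = k \<and> rlap u 0 = - \<epsilon> \<and> rlap (rlap u) 0 = 1 \<and>
     deriv u 0 = 0 \<and> deriv (rlap u) 0 = 0 \<and> deriv (rlap (rlap u)) 0 = 0"

definition S_set :: "real \<Rightarrow> real set" where
  "S_set k = {\<epsilon>. \<epsilon> > 0 \<and> (\<exists>u. pos_entire_radial_sol k \<epsilon> u)}"

end

theory Submission
  imports Defs
begin
fun Cn :: "nat \<Rightarrow> (real \<Rightarrow> real) \<Rightarrow> bool" where
  "Cn 0 f = continuous_on UNIV f"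
| "Cn (Suc n) f = ((\<forall>x. f differentiable (at x)) \<and> Cn n (deriv f))"

lemma Cn_SucI:
  assumes "\<And>x. (f has_real_derivative g x) (at x)" "Cn n g"
  shows "Cn (Suc n) f"
proof -
  have "deriv f = g" using assms(1) DERIV_imp_deriv by blast
  moreover have "\<forall>x. f differentiable (at x)" using assms(1) real_differentiable_def by blast
  ultimately show ?thesis using assms(2) by simp
qed

lemma Cn_SucD:
  assumes "Cn (Suc n) f"
  shows "\<And>x. (f has_real_derivative deriv f x) (at x)" "Cn n (deriv f)"
  using assms by (auto simp: DERIV_deriv_iff_real_differentiable)

lemma Cn_cont: "Cn n f \<Longrightarrow> continuous_on UNIV f"
  by (cases n) (auto intro!: differentiable_imp_continuous_on simp: differentiable_on_def)

lemma Cn_mono: "Cn (Suc n) f \<Longrightarrow> Cn n f"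
proof (induction n arbitrary: f)
  case 0 then show ?case using Cn_cont[of 1 f] by simp
next
  case (Suc n)
  then have "Cn n (deriv f)" by simp
  then show ?case using Suc.prems by simp
qed

lemma Cn_le: "Cn n f \<Longrightarrow> m \<le> n \<Longrightarrow> Cn m f"
proof (induction n)
  case 0 then show ?case by simp
next
  case (Suc n)
  then show ?case by (metis Cn_mono le_Suc_eq)
qed

lemma Cn_const: "Cn n (\<lambda>x. c)"
proof (induction n arbitrary: c)
  case 0 then show ?case by simp
next
  case (Suc n)
  show ?case by (rule Cn_SucI[where g="\<lambda>x. 0"]) (auto intro!: derivative_eq_intros Suc)
qed

lemma Cn_add: "Cn n f \<Longrightarrow> Cn n g \<Longrightarrow> Cn n (\<lambda>x. f x + g x)"
proof (induction n arbitrary: f g)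
  case 0 then show ?case by (auto intro!: continuous_intros)
next
  case (Suc n)
  show ?case
    by (rule Cn_SucI[where g="\<lambda>x. deriv f x + deriv g x"])
       (use Suc Cn_SucD in \<open>auto intro!: derivative_eq_intros\<close>)
qed

lemma Cn_uminus: "Cn n f \<Longrightarrow> Cn n (\<lambda>x. - f x)"
proof (induction n arbitrary: f)
  case 0 then show ?case by (auto intro!: continuous_intros)
next
  case (Suc n)
  show ?case
    by (rule Cn_SucI[where g="\<lambda>x. - deriv f x"])
       (use Suc Cn_SucD in \<open>auto intro!: derivative_eq_intros\<close>)
qed

lemma Cn_diff: "Cn n f \<Longrightarrow> Cn n g \<Longrightarrow> Cn n (\<lambda>x. f x - g x)"
  using Cn_add[of n f "\<lambda>x. - g x"] Cn_uminus[of n g] by simp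

lemma Cn_mult: "Cn n f \<Longrightarrow> Cn n g \<Longrightarrow> Cn n (\<lambda>x. f x * g x)"
proof (induction n arbitrary: f g)
  case 0 then show ?case by (auto intro!: continuous_intros)
next
  case (Suc n)
  have "Cn n (\<lambda>x. deriv f x * g x + f x * deriv g x)"
    using Suc Cn_mono[of n f] Cn_mono[of n g] by (intro Cn_add Suc.IH) auto
  moreover have df: "\<And>x. (f has_real_derivative deriv f x) (at x)"
    and dg: "\<And>x. (g has_real_derivative deriv g x) (at x)"
    using Suc.prems Cn_SucD by blast+
  ultimately show ?case
    by (intro Cn_SucI[where g="\<lambda>x. deriv f x * g x + f x * deriv g x"])
       (auto intro!: derivative_eq_intros df dg)
qed

lemma Cn_id: "Cn n (\<lambda>x. x)"
proof (cases n)
  case 0 then show ?thesis by (auto intro!: continuous_intros)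
next
  case (Suc m)
  show ?thesis unfolding Suc
    by (rule Cn_SucI[where g="\<lambda>x. 1"]) (auto intro!: derivative_eq_intros Cn_const)
qed

lemma Cn_inverse: "Cn n f \<Longrightarrow> (\<And>x. f x \<noteq> 0) \<Longrightarrow> Cn n (\<lambda>x. 1 / f x)"
proof (induction n arbitrary: f)
  case 0 then show ?case by (auto intro!: continuous_intros)
next
  case (Suc n)
  have i: "Cn n (\<lambda>x. 1 / f x)" using Suc Cn_mono[of n f] by auto
  have "Cn n (\<lambda>x. - (deriv f x * (1 / f x) * (1 / f x)))"
    using Suc i by (intro Cn_uminus Cn_mult) auto
  moreover have df: "\<And>x. (f has_real_derivative deriv f x) (at x)"
    using Suc.prems Cn_SucD by blast+
  ultimately show ?case
    apply (intro Cn_SucI[where g="\<lambda>x. - (deriv f x * (1 / f x) * (1 / f x))"])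
    using Suc.prems apply (auto intro!: derivative_eq_intros df simp: power2_eq_square field_simps)
    done
qed

definition Sm :: "(real \<Rightarrow> real) \<Rightarrow> bool" where "Sm f = (\<forall>n. Cn n f)"

lemma Sm_deriv: "Sm f \<Longrightarrow> Sm (deriv f)"
  unfolding Sm_def using Cn.simps(2) by blast

lemma Sm_DERIV: "Sm f \<Longrightarrow> (f has_real_derivative deriv f x) (at x)"
  unfolding Sm_def using Cn_SucD(1) by blast

lemma Sm_funpow: "Sm f \<Longrightarrow> Sm ((deriv ^^ m) f)"
  by (induction m) (auto intro: Sm_deriv)

lemma Sm_smooth_fun: "Sm f \<Longrightarrow> smooth_fun f"
  unfolding smooth_fun_def
  using Sm_funpow Sm_DERIV real_differentiable_def by blast

lemma smooth_fun_Cn: "smooth_fun f \<Longrightarrow> Cn n ((deriv ^^ m) f)"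
proof (induction n arbitrary: m)
  case 0
  then show ?case unfolding smooth_fun_def
    by (auto intro!: differentiable_imp_continuous_on simp: differentiable_on_def)
next
  case (Suc n)
  then show ?case using Suc.IH[of "Suc m"] unfolding smooth_fun_def by auto
qed

lemma smooth_fun_Sm: "smooth_fun f \<Longrightarrow> Sm f"
  unfolding Sm_def using smooth_fun_Cn[of f _ 0] by simp

definition AI :: "(real \<Rightarrow> real) \<Rightarrow> real \<Rightarrow> real" where
  "AI h x = (if 0 \<le> x then integral {0..x} h else - integral {x..0} h)"

definition LI :: "(real \<Rightarrow> real) \<Rightarrow> bool" where
  "LI h = (\<forall>a b. h integrable_on {a..b})"

lemma LI_cont: "continuous_on UNIV h \<Longrightarrow> LI h"
  unfolding LI_def by (meson continuous_on_subset integrable_continuous_real subset_UNIV)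

lemma AI_0[simp]: "AI h 0 = 0"
  by (simp add: AI_def)

lemma AI_alt:
  assumes "LI h" "a \<le> 0" "a \<le> x"
  shows "AI h x = integral {a..x} h - integral {a..0} h"
proof (cases "0 \<le> x")
  case True
  have "integral {a..0} h + integral {0..x} h = integral {a..x} h"
    by (rule Henstock_Kurzweil_Integration.integral_combine) (use assms True in \<open>auto simp: LI_def\<close>)
  then show ?thesis using True by (simp add: AI_def)
next
  case False
  have "integral {a..x} h + integral {x..0} h = integral {a..0} h"
    by (rule Henstock_Kurzweil_Integration.integral_combine) (use assms False in \<open>auto simp: LI_def\<close>)
  then show ?thesis using False by (simp add: AI_def)
qed

lemma AI_isCont:
  assumes "LI h"
  shows "isCont (AI h) x"
proof -
  define a where "a = - \<bar>x\<bar> - 1"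
  define b where "b = \<bar>x\<bar> + 1"
  have "continuous_on {a..b} (\<lambda>y. integral {a..y} h - integral {a..0} h)"
    using assms unfolding LI_def
    by (intro continuous_intros indefinite_integral_continuous_1) auto
  then have "continuous_on {a..b} (AI h)"
    by (rule continuous_on_eq) (use assms AI_alt[of h a] in \<open>auto simp: a_def\<close>)
  moreover have "x \<in> interior {a..b}" by (auto simp: a_def b_def)
  ultimately show ?thesis using continuous_on_interior by blast
qed

lemma AI_cont: "LI h \<Longrightarrow> continuous_on UNIV (AI h)"
  by (simp add: AI_isCont continuous_at_imp_continuous_on)

lemma AI_LI: "LI h \<Longrightarrow> LI (AI h)"
  by (simp add: AI_cont LI_cont)

lemma AI_deriv:
  assumes "continuous_on UNIV h"
  shows "(AI h has_real_derivative h x) (at x)"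
proof -
  define a where "a = - \<bar>x\<bar> - 1"
  define b where "b = \<bar>x\<bar> + 1"
  have "((\<lambda>y. integral {a..y} h) has_real_derivative h x) (at x within {a..b})"
    using assms by (intro integral_has_real_derivative) (auto simp: a_def b_def intro: continuous_on_subset)
  moreover have "x \<in> interior {a..b}" by (auto simp: a_def b_def)
  ultimately have "((\<lambda>y. integral {a..y} h) has_real_derivative h x) (at x)"
    using at_within_interior by metis
  then have "((\<lambda>y. integral {a..y} h - integral {a..0} h) has_real_derivative h x) (at x)"
    by (auto intro!: derivative_eq_intros)
  then show ?thesis
    by (rule has_field_derivative_transform_within_open[where S="{a<..}"])
       (use assms LI_cont AI_alt[of h a] in \<open>auto simp: a_def\<close>)
qed

lemma AI_FTC:
  assumes "\<And>x. (F has_real_derivative f x) (at x)"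
  shows "AI f x = F x - F 0"
proof (cases "0 \<le> x")
  case True
  have "(f has_integral (F x - F 0)) {0..x}"
    using True assms
    by (intro fundamental_theorem_of_calculus)
       (auto simp: has_real_derivative_iff_has_vector_derivative[symmetric] intro: has_field_derivative_at_within)
  then show ?thesis using True by (simp add: AI_def integral_unique)
next
  case False
  have "(f has_integral (F 0 - F x)) {x..0}"
    using False assms
    by (intro fundamental_theorem_of_calculus)
       (auto simp: has_real_derivative_iff_has_vector_derivative[symmetric] intro: has_field_derivative_at_within)
  then show ?thesis using False by (simp add: AI_def integral_unique)
qed

lemma AI_mono:
  assumes "LI h1" "LI h2" "0 \<le> x" "\<And>s. 0 \<le> s \<Longrightarrow> s \<le> x \<Longrightarrow> h1 s \<le> h2 s"
  shows "AI h1 x \<le> AI h2 x"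
  using assms unfolding AI_def LI_def by (auto intro!: Henstock_Kurzweil_Integration.integral_le)

lemma AI_nonneg:
  assumes "LI h" "0 \<le> x" "\<And>s. 0 \<le> s \<Longrightarrow> s \<le> x \<Longrightarrow> 0 \<le> h s"
  shows "0 \<le> AI h x"
  using assms unfolding AI_def LI_def by (auto intro!: Henstock_Kurzweil_Integration.integral_nonneg)

lemma AI_even:
  assumes "LI h" "\<And>s. h (- s) = - h s"
  shows "AI h (- x) = AI h x"
proof -
  have odd: "(\<lambda>s. h (- s)) = (\<lambda>s. - h s)" using assms(2) by auto
  have i1: "integral {-x..0} h = - integral {0..x} h" if "0 \<le> x" for x
  proof -
    have "integral {-x..-0} (\<lambda>s. h (-s)) = integral {0..x} h" by (rule Henstock_Kurzweil_Integration.integral_reflect_real)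
    then show ?thesis unfolding odd by (simp add: integral_neg)
  qed
  show ?thesis
  proof (cases "x = 0")
    case True then show ?thesis by simp
  next
    case False
    show ?thesis
    proof (cases "0 < x")
      case True then show ?thesis using i1[of x] by (simp add: AI_def)
    next
      case f2: False
      then have "0 \<le> - x" by simp
      from i1[OF this] show ?thesis using f2 False by (simp add: AI_def)
    qed
  qed
qed

lemma AI_odd:
  assumes "LI h" "\<And>s. h (- s) = h s"
  shows "AI h (- x) = - AI h x"
proof -
  have ev: "(\<lambda>s. h (- s)) = h" using assms(2) by auto
  have i1: "integral {-x..0} h = integral {0..x} h" if "0 \<le> x" for x
  proof -
    have "integral {-x..-0} (\<lambda>s. h (-s)) = integral {0..x} h" by (rule Henstock_Kurzweil_Integration.integral_reflect_real)
    then show ?thesis unfolding ev by simp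
  qed
  show ?thesis
  proof (cases "x = 0")
    case True then show ?thesis by simp
  next
    case False
    show ?thesis
    proof (cases "0 < x")
      case True then show ?thesis using i1[of x] by (simp add: AI_def)
    next
      case f2: False
      then have "0 \<le> - x" by simp
      from i1[OF this] show ?thesis using f2 False by (simp add: AI_def)
    qed
  qed
qed

lemma AI_pow_LI: "LI h \<Longrightarrow> LI ((AI ^^ n) h)"
  by (induction n) (auto intro: AI_LI)

lemma AI_pow_cont: "LI h \<Longrightarrow> continuous_on UNIV ((AI ^^ Suc n) h)"
proof -
  assume "LI h"
  then have "LI ((AI ^^ n) h)" by (rule AI_pow_LI)
  then show ?thesis using AI_cont by simp
qed

lemma AI_Cn: "Cn n h \<Longrightarrow> Cn (Suc n) (AI h)"
  by (rule Cn_SucI[where g=h]) (auto intro: AI_deriv Cn_cont)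

lemma AI_pow_Cn: "LI h \<Longrightarrow> Cn n ((AI ^^ Suc n) h)"
proof (induction n)
  case 0 then show ?case using AI_cont by simp
next
  case (Suc n)
  then have "Cn n ((AI ^^ Suc n) h)" by blast
  then have "Cn (Suc n) (AI ((AI ^^ Suc n) h))" by (rule AI_Cn)
  then show ?case by (metis comp_apply funpow.simps(2))
qed

lemma AI_pow_Cn_add: "Cn n h \<Longrightarrow> Cn (n + j) ((AI ^^ j) h)"
proof (induction j)
  case 0 then show ?case by simp
next
  case (Suc j)
  then have "Cn (n + j) ((AI ^^ j) h)" by blast
  then have "Cn (Suc (n + j)) (AI ((AI ^^ j) h))" by (rule AI_Cn)
  then show ?case by simp
qed

lemma AI_pow_deriv:
  assumes "continuous_on UNIV h"
  shows "((AI ^^ Suc j) h has_real_derivative (AI ^^ j) h x) (at x)"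
proof -
  have "continuous_on UNIV ((AI ^^ j) h)"
  proof (cases j)
    case 0 then show ?thesis using assms by simp
  next
    case (Suc i)
    then show ?thesis using AI_pow_cont[OF LI_cont[OF assms], of i] by simp
  qed
  then show ?thesis by (simp add: AI_deriv)
qed

lemma AI_pow_0: "(AI ^^ Suc j) h 0 = 0"
  by simp

lemma AI_pow_mono:
  assumes "LI h1" "LI h2" "\<And>s. 0 \<le> s \<Longrightarrow> h1 s \<le> h2 s" "0 \<le> x"
  shows "(AI ^^ n) h1 x \<le> (AI ^^ n) h2 x"
  using assms(4)
proof (induction n arbitrary: x)
  case 0 then show ?case using assms by simp
next
  case (Suc n)
  have "AI ((AI ^^ n) h1) x \<le> AI ((AI ^^ n) h2) x"
    by (rule AI_mono) (use Suc assms AI_pow_LI in auto)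
  then show ?case by simp
qed

lemma AI_pow_nonneg:
  assumes "LI h" "\<And>s. 0 \<le> s \<Longrightarrow> 0 \<le> h s" "0 \<le> x"
  shows "0 \<le> (AI ^^ n) h x"
proof -
  have l0: "LI (\<lambda>_. 0)" by (rule LI_cont) simp
  have "(AI ^^ n) (\<lambda>_. 0) x \<le> (AI ^^ n) h x"
    by (rule AI_pow_mono[OF l0 assms(1)]) (use assms in auto)
  moreover have z: "AI (\<lambda>_. 0) = (\<lambda>_. 0)"
    by (rule ext) (simp add: AI_def)
  have "(AI ^^ n) (\<lambda>_. 0) = (\<lambda>_. 0)"
    by (induction n) (simp_all add: z)
  ultimately show ?thesis by simp
qed

definition Mj :: "nat \<Rightarrow> (real \<Rightarrow> real) \<Rightarrow> real \<Rightarrow> real" where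
  "Mj j g r = integral {0..1} (\<lambda>t. t ^ j * g (r * t))"

definition Dv :: "(real \<Rightarrow> real) \<Rightarrow> real \<Rightarrow> real" where
  "Dv f x = (if x = 0 then deriv f 0 else f x / x)"

lemma M_param_cont:
  assumes "continuous_on UNIV g"
  shows "continuous_on (UNIV \<times> cbox 0 1) (\<lambda>(x, t). t ^ j * (g (x * t)::real))"
proof -
  have "continuous_on (UNIV \<times> cbox 0 (1::real)) (\<lambda>p. g (fst p * snd p))"
    by (rule continuous_on_compose2[OF assms]) (auto intro!: continuous_intros)
  then show ?thesis
    by (auto simp: split_beta intro!: continuous_intros)
qed

lemma M_cont:
  assumes "continuous_on UNIV g"
  shows "continuous_on UNIV (Mj j g)"
proof -
  have "continuous_on UNIV (\<lambda>x. integral (cbox 0 1) (\<lambda>t. t ^ j * g (x * t)))"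
    using integral_continuous_on_param[OF M_param_cont[OF assms, of j]] by simp
  then show ?thesis unfolding Mj_def by simp
qed

lemma M_deriv:
  assumes gd: "\<And>x. (g has_real_derivative g' x) (at x)" and gc: "continuous_on UNIV g'"
  shows "(Mj j g has_real_derivative Mj (Suc j) g' x) (at x)"
proof -
  have gcont: "continuous_on UNIV g"
    using gd by (meson DERIV_continuous continuous_at_imp_continuous_on)
  have "((\<lambda>x. integral (cbox 0 1) (\<lambda>t. t ^ j * g (x * t))) has_field_derivative
           integral (cbox 0 1) (\<lambda>t. t ^ Suc j * g' (x * t))) (at x within UNIV)"
  proof (rule leibniz_rule_field_derivative)
    fix x t :: real
    have "((\<lambda>x. g (x * t)) has_real_derivative g' (x * t) * t) (at x)"
      by (rule DERIV_chain2[OF gd]) (auto intro!: derivative_eq_intros)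
    then show "((\<lambda>x. t ^ j * g (x * t)) has_field_derivative t ^ Suc j * g' (x * t)) (at x within UNIV)"
      by (auto intro!: derivative_eq_intros simp: algebra_simps)
  next
    fix x :: real
    show "(\<lambda>t. t ^ j * g (x * t)) integrable_on cbox 0 1"
      by (rule integrable_continuous) (auto intro!: continuous_intros continuous_on_compose2[OF gcont])
  next
    show "continuous_on (UNIV \<times> cbox 0 1) (\<lambda>(x, t). t ^ Suc j * g' (x * t))"
      by (rule M_param_cont[OF gc])
  qed auto
  then show ?thesis unfolding Mj_def by simp
qed

lemma M_Cn: "Cn n g \<Longrightarrow> Cn n (Mj j g)"
proof (induction n arbitrary: g j)
  case 0 then show ?case using M_cont by simp
next
  case (Suc n)
  have gd: "\<And>x. (g has_real_derivative deriv g x) (at x)" and c: "Cn n (deriv g)"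
    using Cn_SucD[OF Suc.prems] by auto
  have "Cn n (Mj (Suc j) (deriv g))" using Suc.IH[OF c] .
  then show ?case
    by (intro Cn_SucI[OF M_deriv[OF gd]]) (auto intro: Cn_cont[OF c])
qed

lemma Dv_M:
  assumes fd: "\<And>x. (f has_real_derivative f' x) (at x)" and f0: "f 0 = 0"
  shows "Dv f = Mj 0 f'"
proof
  fix x :: real
  show "Dv f x = Mj 0 f' x"
  proof (cases "x = 0")
    case True
    have "deriv f 0 = f' 0" using fd DERIV_imp_deriv by blast
    then show ?thesis using True by (simp add: Dv_def Mj_def)
  next
    case False
    have "((\<lambda>t. f' (x * t)) has_integral ((\<lambda>t. f (x * t) / x) 1 - (\<lambda>t. f (x * t) / x) 0)) {0..1}"
    proof (rule fundamental_theorem_of_calculus)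
      fix t :: real
      have "((\<lambda>t. f (x * t)) has_real_derivative f' (x * t) * x) (at t)"
        by (rule DERIV_chain2[OF fd]) (auto intro!: derivative_eq_intros)
      then have "((\<lambda>t. f (x * t) / x) has_real_derivative f' (x * t)) (at t)"
        using False by (auto intro!: derivative_eq_intros)
      then show "((\<lambda>t. f (x * t) / x) has_vector_derivative f' (x * t)) (at t within {0..1})"
        by (simp add: has_real_derivative_iff_has_vector_derivative[symmetric] has_field_derivative_at_within)
    qed simp
    then show ?thesis using False f0 by (simp add: Dv_def Mj_def integral_unique)
  qed
qed

lemma L1:
  assumes "Cn (Suc n) f" "f 0 = 0"
  shows "Cn n (Dv f)"
proof -
  have fd: "\<And>x. (f has_real_derivative deriv f x) (at x)" and c: "Cn n (deriv f)"
    using Cn_SucD[OF assms(1)] by auto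
  show ?thesis using Dv_M[OF fd assms(2)] M_Cn[OF c] by simp
qed

lemma L1_Sm: "Sm f \<Longrightarrow> f 0 = 0 \<Longrightarrow> Sm (Dv f)"
  unfolding Sm_def using L1 by blast

lemma deriv_of_even:
  assumes fd: "\<And>x. (f has_real_derivative f' x) (at x)" and ev: "\<And>x. f (- x) = f x"
  shows "f' (- x) = - f' x"
proof -
  have "((\<lambda>x. f (- x)) has_real_derivative f' (- x) * (- 1)) (at x)"
    by (rule DERIV_chain2[OF fd]) (auto intro!: derivative_eq_intros)
  moreover have "(\<lambda>x. f (- x)) = f" using ev by auto
  ultimately have "(f has_real_derivative - f' (- x)) (at x)" by simp
  from DERIV_unique[OF fd[of x] this] show ?thesis by simp
qed

lemma deriv_of_odd:
  assumes fd: "\<And>x. (f has_real_derivative f' x) (at x)" and od: "\<And>x. f (- x) = - f x"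
  shows "f' (- x) = f' x"
proof -
  have "((\<lambda>x. f (- x)) has_real_derivative f' (- x) * (- 1)) (at x)"
    by (rule DERIV_chain2[OF fd]) (auto intro!: derivative_eq_intros)
  moreover have "(\<lambda>x. f (- x)) = (\<lambda>x. - f x)" using od by auto
  ultimately have "((\<lambda>x. - f x) has_real_derivative - f' (- x)) (at x)" by simp
  then have "((\<lambda>x. - (- f x)) has_real_derivative - (- f' (- x))) (at x)"
    by (rule DERIV_minus)
  then have "(f has_real_derivative f' (- x)) (at x)" by simp
  from DERIV_unique[OF fd[of x] this] show ?thesis by simp
qed

lemma Sm_even_props:
  assumes "Sm v" "\<And>r. v (- r) = v r"
  shows "\<And>r. deriv v (- r) = - deriv v r" "\<And>r. deriv (deriv v) (- r) = deriv (deriv v) r"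
    "deriv v 0 = 0"
proof -
  have d1: "\<And>x. (v has_real_derivative deriv v x) (at x)" using Sm_DERIV[OF assms(1)] .
  have d2: "\<And>x. (deriv v has_real_derivative deriv (deriv v) x) (at x)"
    using Sm_DERIV[OF Sm_deriv[OF assms(1)]] .
  show o: "\<And>r. deriv v (- r) = - deriv v r" using deriv_of_even[OF d1 assms(2)] .
  show "\<And>r. deriv (deriv v) (- r) = deriv (deriv v) r" using deriv_of_odd[OF d2 o] .
  show "deriv v 0 = 0" using o[of 0] by simp
qed

lemma deriv_times_x:
  assumes "Sm w"
  shows "deriv (\<lambda>r. r * w r) = (\<lambda>r. w r + r * deriv w r)"
proof
  fix x
  show "deriv (\<lambda>r. r * w r) x = w x + x * deriv w x"
    by (rule DERIV_imp_deriv) (auto intro!: derivative_eq_intros Sm_DERIV[OF assms])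
qed

lemma deriv_times_x_0:
  assumes "Sm w"
  shows "deriv (\<lambda>r. r * w r) 0 = w 0"
  using deriv_times_x[OF assms] by simp

lemma G_lemma:
  assumes sm: "Sm v" and ev: "\<And>r. v (- r) = v r"
  defines "F \<equiv> (\<lambda>r. 2 * deriv v r + r * deriv (deriv v) r)"
  shows "deriv (deriv (\<lambda>r. r * v r)) = F"
    and "(\<lambda>r. r * rlap v r) = F"
    and "rlap v = Dv F"
    and "Sm (rlap v)"
    and "\<And>r. rlap v (- r) = rlap v r"
    and "Sm F" "F 0 = 0"
proof -
  have d1: "\<And>x. (v has_real_derivative deriv v x) (at x)" using Sm_DERIV[OF sm] .
  have d2: "\<And>x. (deriv v has_real_derivative deriv (deriv v) x) (at x)"
    using Sm_DERIV[OF Sm_deriv[OF sm]] .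
  have d3: "\<And>x. (deriv (deriv v) has_real_derivative deriv (deriv (deriv v)) x) (at x)"
    using Sm_DERIV[OF Sm_deriv[OF Sm_deriv[OF sm]]] .
  note pr = Sm_even_props[OF sm ev]
  have e1: "deriv (\<lambda>r. r * v r) = (\<lambda>r. v r + r * deriv v r)" by (rule deriv_times_x[OF sm])
  show dd: "deriv (deriv (\<lambda>r. r * v r)) = F"
    unfolding e1
  proof
    fix x
    show "deriv (\<lambda>r. v r + r * deriv v r) x = F x"
      unfolding F_def by (rule DERIV_imp_deriv) (auto intro!: derivative_eq_intros d1 d2)
  qed
  show F0: "F 0 = 0" using pr(3) by (simp add: F_def)
  show "(\<lambda>r. r * rlap v r) = F"
  proof
    fix r :: real
    show "r * rlap v r = F r"
      by (cases "r = 0") (auto simp: rlap_def F_def field_simps pr(3))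
  qed
  have Fd: "(F has_real_derivative 3 * deriv (deriv v) 0) (at 0)"
  proof -
    have "(F has_real_derivative 2 * deriv (deriv v) 0 + (1 * deriv (deriv v) 0 + 0 * deriv (deriv (deriv v)) 0)) (at 0)"
      unfolding F_def by (auto intro!: derivative_eq_intros d1 d2 d3)
    then show ?thesis by simp
  qed
  show rl: "rlap v = Dv F"
  proof
    fix r :: real
    show "rlap v r = Dv F r"
    proof (cases "r = 0")
      case True
      then show ?thesis using DERIV_imp_deriv[OF Fd] by (simp add: rlap_def Dv_def)
    next
      case False
      then show ?thesis by (simp add: rlap_def Dv_def F_def field_simps)
    qed
  qed
  have smF: "Sm F"
  proof -
    have "Sm (deriv v)" "Sm (deriv (deriv v))" using Sm_deriv sm by blast+
    then show ?thesis unfolding Sm_def F_def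
      by (auto intro!: Cn_add Cn_mult Cn_const Cn_id)
  qed
  then show "Sm F" .
  show "Sm (rlap v)" unfolding rl by (rule L1_Sm[OF smF F0])
  show "\<And>r. rlap v (- r) = rlap v r"
    by (auto simp: rlap_def pr(1,2))
qed

definition Pk :: "real \<Rightarrow> real \<Rightarrow> real \<Rightarrow> real" where
  "Pk k e r = k - e * r ^ 2 / 6 + r ^ 4 / 120"

definition Nf :: "(real \<Rightarrow> real) \<Rightarrow> real \<Rightarrow> real" where
  "Nf u s = s / (u s) ^ 3"

definition Tm :: "real \<Rightarrow> real \<Rightarrow> (real \<Rightarrow> real) \<Rightarrow> real \<Rightarrow> real" where
  "Tm k e u r = (if r = 0 then k else Pk k e r - (AI ^^ 6) (Nf u) r / r)"

fun Qs :: "real \<Rightarrow> real \<Rightarrow> nat \<Rightarrow> real \<Rightarrow> real" where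
  "Qs k e 0 r = k * r - e * r ^ 3 / 6 + r ^ 5 / 120"
| "Qs k e (Suc 0) r = k - e * r ^ 2 / 2 + r ^ 4 / 24"
| "Qs k e (Suc (Suc 0)) r = - e * r + r ^ 3 / 6"
| "Qs k e (Suc (Suc (Suc 0))) r = - e + r ^ 2 / 2"
| "Qs k e (Suc (Suc (Suc (Suc 0)))) r = r"
| "Qs k e (Suc (Suc (Suc (Suc (Suc 0))))) r = 1"
| "Qs k e (Suc (Suc (Suc (Suc (Suc (Suc _)))))) r = 0"

definition Phi :: "real \<Rightarrow> real \<Rightarrow> (real \<Rightarrow> real) \<Rightarrow> nat \<Rightarrow> real \<Rightarrow> real" where
  "Phi k e u j r = Qs k e j r - (AI ^^ (6 - j)) (Nf u) r"

definition sol :: "real \<Rightarrow> real \<Rightarrow> (real \<Rightarrow> real) \<Rightarrow> bool" where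
  "sol k e u = ((\<forall>r. u (- r) = u r) \<and> (\<forall>r. 0 < u r) \<and> continuous_on UNIV u \<and> (\<forall>r. u r = Tm k e u r))"

lemma Qs_eqs: "Qs k e 0 = (\<lambda>r. k * r - e * r ^ 3 / 6 + r ^ 5 / 120)"
  "Qs k e 1 = (\<lambda>r. k - e * r ^ 2 / 2 + r ^ 4 / 24)"
  "Qs k e 2 = (\<lambda>r. - e * r + r ^ 3 / 6)"
  "Qs k e 3 = (\<lambda>r. - e + r ^ 2 / 2)"
  "Qs k e 4 = (\<lambda>r. r)"
  "Qs k e 5 = (\<lambda>r. 1)"
  "Qs k e 6 = (\<lambda>r. 0)"
  by (simp_all add: fun_eq_iff numeral_eq_Suc)

lemma Qs_deriv:
  assumes "j < 6"
  shows "(Qs k e j has_real_derivative Qs k e (Suc j) x) (at x)"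
proof -
  have "j = 0 \<or> j = 1 \<or> j = 2 \<or> j = 3 \<or> j = 4 \<or> j = 5" using assms by auto
  moreover have "(Qs k e 0 has_real_derivative Qs k e 1 x) (at x)"
    unfolding Qs_eqs by (auto intro!: derivative_eq_intros simp: field_simps)
  moreover have "(Qs k e 1 has_real_derivative Qs k e 2 x) (at x)"
    unfolding Qs_eqs by (auto intro!: derivative_eq_intros simp: field_simps)
  moreover have "(Qs k e 2 has_real_derivative Qs k e 3 x) (at x)"
    unfolding Qs_eqs by (auto intro!: derivative_eq_intros simp: field_simps)
  moreover have "(Qs k e 3 has_real_derivative Qs k e 4 x) (at x)"
    unfolding Qs_eqs by (auto intro!: derivative_eq_intros simp: field_simps)
  moreover have "(Qs k e 4 has_real_derivative Qs k e 5 x) (at x)"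
    unfolding Qs_eqs by (auto intro!: derivative_eq_intros simp: field_simps)
  moreover have "(Qs k e 5 has_real_derivative Qs k e 6 x) (at x)"
    unfolding Qs_eqs by (auto intro!: derivative_eq_intros simp: field_simps)
  ultimately show ?thesis
    by (elim disjE) (simp_all add: numeral_eq_Suc)
qed

lemma Qs_0: "Qs k e 0 0 = 0" "Qs k e 1 0 = k" "Qs k e 2 0 = 0" "Qs k e 3 0 = - e"
  "Qs k e 4 0 = 0" "Qs k e 5 0 = 1" "Qs k e 6 r = 0"
  by (simp_all add: numeral_eq_Suc)

lemma Qs_Pk: "Qs k e 0 r = r * Pk k e r"
  by (simp add: Pk_def field_simps power_def)

lemma Cn_poly_pow: "Cn n (\<lambda>x. (x::real) ^ m)"
  by (induction m) (auto intro: Cn_mult Cn_const Cn_id)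

lemma Qs_Cn: "Cn n (Qs k e 0)"
proof -
  have "Cn n (\<lambda>r. k * r - (e / 6) * r ^ 3 + (1 / 120) * r ^ 5)"
    by (intro Cn_add Cn_diff Cn_mult Cn_const Cn_id Cn_poly_pow)
  then show ?thesis by (simp add: Qs_eqs)
qed

lemma Phi_deriv:
  assumes "continuous_on UNIV (Nf u)" "j < 6"
  shows "(Phi k e u j has_real_derivative Phi k e u (Suc j) x) (at x)"
proof -
  have e: "6 - j = Suc (5 - j)" "6 - Suc j = 5 - j" using assms(2) by auto
  show ?thesis
    unfolding Phi_def e
    by (intro derivative_intros Qs_deriv AI_pow_deriv assms)
qed

lemma Phi_6: "Phi k e u 6 = (\<lambda>r. - Nf u r)"
  by (simp add: Phi_def fun_eq_iff numeral_eq_Suc)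

lemma Phi0_deriv_LI:
  assumes "LI (Nf u)"
  shows "(Phi k e u 0 has_real_derivative Phi k e u 1 x) (at x)"
proof -
  have c: "continuous_on UNIV ((AI ^^ 5) (Nf u))"
    using AI_pow_cont[OF assms, of 4] by (simp add: numeral_eq_Suc)
  have "((AI ^^ 6) (Nf u) has_real_derivative (AI ^^ 5) (Nf u) x) (at x)"
    using AI_deriv[OF c] by (simp add: numeral_eq_Suc)
  from DERIV_diff[OF Qs_deriv[of 0 k e x] this]
  have "((\<lambda>r. Qs k e 0 r - (AI ^^ 6) (Nf u) r) has_real_derivative Qs k e 1 x - (AI ^^ 5) (Nf u) x) (at x)"
    by simp
  moreover have "Phi k e u 0 = (\<lambda>r. Qs k e 0 r - (AI ^^ 6) (Nf u) r)"
    by (simp add: Phi_def fun_eq_iff)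
  moreover have "Phi k e u 1 x = Qs k e 1 x - (AI ^^ 5) (Nf u) x"
    by (simp add: Phi_def)
  ultimately show ?thesis by simp
qed

lemma Phi_at0: "j < 6 \<Longrightarrow> Phi k e u j 0 = Qs k e j 0"
proof -
  assume "j < 6"
  then have "6 - j = Suc (5 - j)" by auto
  then show ?thesis unfolding Phi_def by (simp del: funpow.simps add: AI_pow_0)
qed

lemma Tm_Dv:
  assumes "LI (Nf u)"
  shows "Tm k e u = Dv (Phi k e u 0)"
proof
  fix r :: real
  show "Tm k e u r = Dv (Phi k e u 0) r"
  proof (cases "r = 0")
    case True
    have "deriv (Phi k e u 0) 0 = Phi k e u 1 0"
      using DERIV_imp_deriv[OF Phi0_deriv_LI[OF assms]] by blast
    also have "\<dots> = k" using Phi_at0[of 1] Qs_0 by simp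
    finally show ?thesis using True by (simp add: Tm_def Dv_def)
  next
    case False
    then show ?thesis by (simp add: Tm_def Dv_def Phi_def Pk_def field_simps power_def)
  qed
qed

lemma Phi0_0: "Phi k e u 0 0 = 0"
  using Phi_at0[of 0] Qs_0 by simp

lemma Tm_Cn4:
  assumes "LI (Nf u)"
  shows "Cn 4 (Tm k e u)"
proof -
  have "Cn 5 ((AI ^^ Suc 5) (Nf u))" by (rule AI_pow_Cn[OF assms])
  then have "Cn 5 (Phi k e u 0)"
    unfolding Phi_def by (intro Cn_diff Qs_Cn) simp
  then have "Cn 4 (Dv (Phi k e u 0))"
    using L1[of 4] Phi0_0 by (simp add: numeral_eq_Suc)
  then show ?thesis using Tm_Dv[OF assms] by simp
qed

lemma Tm_cont: "LI (Nf u) \<Longrightarrow> continuous_on UNIV (Tm k e u)"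
  using Tm_Cn4 Cn_cont by blast

lemma Tm_Cn_boot:
  assumes "Cn m (Nf u)"
  shows "Cn (m + 5) (Tm k e u)"
proof -
  have li: "LI (Nf u)" using Cn_cont[OF assms] LI_cont by blast
  have "Cn (m + 6) ((AI ^^ 6) (Nf u))" by (rule AI_pow_Cn_add[OF assms])
  then have "Cn (Suc (m + 5)) ((AI ^^ 6) (Nf u))" by (simp add: add.commute)
  then have "Cn (Suc (m + 5)) (Phi k e u 0)"
    unfolding Phi_def by (intro Cn_diff Qs_Cn) simp
  then have "Cn (m + 5) (Dv (Phi k e u 0))"
    using L1 Phi0_0 by blast
  then show ?thesis using Tm_Dv[OF li] by simp
qed

lemma Nf_alt: "Nf u = (\<lambda>s. s * ((1 / u s) * (1 / u s) * (1 / u s)))"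
  by (simp add: Nf_def fun_eq_iff power3_eq_cube field_simps)

lemma Nf_Cn: "Cn m u \<Longrightarrow> (\<And>s. u s \<noteq> 0) \<Longrightarrow> Cn m (Nf u)"
  unfolding Nf_alt by (intro Cn_mult Cn_id Cn_inverse) auto

lemma Nf_cont: "continuous_on UNIV u \<Longrightarrow> (\<And>s. u s \<noteq> 0) \<Longrightarrow> continuous_on UNIV (Nf u)"
  using Nf_Cn[of 0 u] by simp

lemma Nf_odd: "(\<And>r. u (- r) = u r) \<Longrightarrow> Nf u (- s) = - Nf u s"
  by (simp add: Nf_def)

lemma AI_pow_parity:
  assumes "LI h" "\<And>s. h (- s) = - h s"
  shows "(AI ^^ (2 * j)) h (- x) = - (AI ^^ (2 * j)) h x"
  using assms(2)
proof (induction j arbitrary: x)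
  case 0 then show ?case by simp
next
  case (Suc j)
  have ev: "AI ((AI ^^ (2 * j)) h) (- y) = AI ((AI ^^ (2 * j)) h) y" for y
    by (rule AI_even[OF AI_pow_LI[OF assms(1)]]) (use Suc in auto)
  have "AI (AI ((AI ^^ (2 * j)) h)) (- x) = - AI (AI ((AI ^^ (2 * j)) h)) x"
    by (rule AI_odd) (use ev AI_LI AI_pow_LI assms(1) in auto)
  moreover have "2 * Suc j = Suc (Suc (2 * j))" by simp
  ultimately show ?case by (simp del: funpow.simps add: funpow.simps(2)[of "Suc (2*j)"] funpow.simps(2)[of "2*j"])
qed

lemma Tm_even:
  assumes "LI (Nf u)" "\<And>r. u (- r) = u r"
  shows "Tm k e u (- r) = Tm k e u r"
proof -
  have "(AI ^^ (2 * 3)) (Nf u) (- r) = - (AI ^^ (2 * 3)) (Nf u) r"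
    by (rule AI_pow_parity[OF assms(1)]) (use Nf_odd assms(2) in auto)
  then show ?thesis by (simp add: Tm_def Pk_def)
qed

lemma Sm_mult: "Sm f \<Longrightarrow> Sm g \<Longrightarrow> Sm (\<lambda>x. f x * g x)"
  unfolding Sm_def using Cn_mult by blast

lemma Sm_id: "Sm (\<lambda>x. x)"
  unfolding Sm_def using Cn_id by blast

lemma uniq_chain:
  assumes "\<And>i x. i < n \<Longrightarrow> (E i has_real_derivative E (Suc i) x) (at x)"
    and "\<And>x. E n x = 0" and "\<And>i. i < n \<Longrightarrow> E i 0 = 0"
  shows "E 0 x = 0"
  using assms
proof (induction n arbitrary: E x)
  case 0 then show ?case by simp
next
  case (Suc n)
  have e1: "E 1 y = 0" for y
    using Suc.IH[of "\<lambda>i. E (Suc i)" y] Suc.prems by auto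
  have "\<forall>y. (E 0 has_real_derivative 0) (at y)"
    using Suc.prems(1)[of 0] e1 by (metis One_nat_def zero_less_Suc)
  then have "E 0 x = E 0 0" by (rule DERIV_isconst_all)
  then show ?case using Suc.prems(3)[of 0] by simp
qed

lemma G_use:
  assumes "Sm v" "\<And>r. v (- r) = v r"
  shows "deriv (deriv (\<lambda>r. r * v r)) = (\<lambda>r. r * rlap v r)"
    and "rlap v = Dv (\<lambda>r. r * rlap v r)"
    and "Sm (rlap v)" and "\<And>r. rlap v (- r) = rlap v r"
    and "Sm (\<lambda>r. r * rlap v r)"
  using G_lemma[OF assms] by simp_all

lemma BR1:
  assumes "sol k e u"
  shows "pos_entire_radial_sol k e u"
proof -
  have ev: "\<And>r. u (- r) = u r" and pos: "\<And>r. 0 < u r" and cont: "continuous_on UNIV u"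
    and fxp: "\<And>r. u r = Tm k e u r"
    using assms by (auto simp: sol_def)
  have nz: "\<And>s. u s \<noteq> 0" using pos by (metis less_irrefl)
  have Nc: "continuous_on UNIV (Nf u)" using Nf_cont[OF cont nz] .
  have ueq: "Tm k e u = u" using fxp by (simp add: fun_eq_iff)
  have Cnu: "Cn m u" for m
  proof (induction m)
    case 0 then show ?case using cont by simp
  next
    case (Suc m)
    have "Cn m (Nf u)" using Nf_Cn[OF Suc nz] .
    then have "Cn (m + 5) u" using Tm_Cn_boot[of m u k e] ueq by simp
    then show ?case by (rule Cn_le) simp
  qed
  have sm: "Sm u" using Cnu Sm_def by blast
  have psi0: "(\<lambda>r. r * u r) = Phi k e u 0"
  proof
    fix r :: real
    show "r * u r = Phi k e u 0 r"
    proof (cases "r = 0")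
      case True then show ?thesis using Phi0_0 by simp
    next
      case False
      have "r * u r = r * Tm k e u r" using fxp by simp
      also have "\<dots> = Phi k e u 0 r"
        using False by (simp add: Tm_def Phi_def Pk_def field_simps power_def)
      finally show ?thesis .
    qed
  qed
  have dPhi: "\<And>j. j < 6 \<Longrightarrow> deriv (Phi k e u j) = Phi k e u (Suc j)"
    using Phi_deriv[OF Nc] DERIV_imp_deriv by blast
  note g1 = G_use[OF sm ev]
  note g2 = G_use[OF g1(3) g1(4)]
  note g3 = G_use[OF g2(3) g2(4)]
  have p1: "(\<lambda>r. r * rlap u r) = Phi k e u 2"
    using g1(1) psi0 dPhi[of 0] dPhi[of 1] by (simp add: numeral_eq_Suc)
  have p2: "(\<lambda>r. r * rlap (rlap u) r) = Phi k e u 4"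
    using g2(1) p1 dPhi[of 2] dPhi[of 3] by (simp add: numeral_eq_Suc)
  have p3: "(\<lambda>r. r * rlap (rlap (rlap u)) r) = Phi k e u 6"
    using g3(1) p2 dPhi[of 4] dPhi[of 5] by (simp add: numeral_eq_Suc)
  have v1: "rlap u 0 = - e"
  proof -
    have "rlap u 0 = deriv (Phi k e u 2) 0" using g1(2) p1 by (simp add: Dv_def)
    also have "\<dots> = Phi k e u 3 0" using dPhi[of 2] by (simp add: numeral_eq_Suc)
    also have "\<dots> = - e" using Phi_at0[of 3] Qs_0 by simp
    finally show ?thesis .
  qed
  have v2: "rlap (rlap u) 0 = 1"
  proof -
    have "rlap (rlap u) 0 = deriv (Phi k e u 4) 0" using g2(2) p2 by (simp add: Dv_def)
    also have "\<dots> = Phi k e u 5 0" using dPhi[of 4] by (simp add: numeral_eq_Suc)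
    also have "\<dots> = 1" using Phi_at0[of 5] Qs_0 by simp
    finally show ?thesis .
  qed
  have v3: "rlap (rlap (rlap u)) r = - 1 / (u r) ^ 3" if "r > 0" for r
  proof -
    have "r * rlap (rlap (rlap u)) r = - Nf u r" using p3 Phi_6 by (metis)
    then have "rlap (rlap (rlap u)) r = (- Nf u r) / r" using that
      by (metis nonzero_mult_div_cancel_left less_irrefl)
    then show ?thesis using that by (simp add: Nf_def)
  qed
  have u0: "u 0 = k" using fxp[of 0] by (simp add: Tm_def)
  show ?thesis unfolding pos_entire_radial_sol_def
    using Sm_smooth_fun[OF sm] ev pos v3 u0 v1 v2
      Sm_even_props(3)[OF sm ev] Sm_even_props(3)[OF g1(3) g1(4)] Sm_even_props(3)[OF g2(3) g2(4)]
    by auto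
qed

lemma BR2:
  assumes "pos_entire_radial_sol k e u"
  shows "sol k e u"
proof -
  have sf: "smooth_fun u" and ev: "\<And>r. u (- r) = u r" and pos: "\<And>r. 0 < u r"
    and ode: "\<And>r. r > 0 \<Longrightarrow> rlap (rlap (rlap u)) r = - 1 / (u r) ^ 3"
    and u0: "u 0 = k" and r1: "rlap u 0 = - e" and r2: "rlap (rlap u) 0 = 1"
    using assms unfolding pos_entire_radial_sol_def by auto
  have sm: "Sm u" using smooth_fun_Sm[OF sf] .
  have cont: "continuous_on UNIV u" using sm Cn_cont Sm_def by blast
  have nz: "\<And>s. u s \<noteq> 0" using pos by (metis less_irrefl)
  have Nc: "continuous_on UNIV (Nf u)" using Nf_cont[OF cont nz] .
  note g1 = G_use[OF sm ev]
  note g2 = G_use[OF g1(3) g1(4)]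
  note g3 = G_use[OF g2(3) g2(4)]
  define p0 where "p0 = (\<lambda>r. r * u r)"
  define p1 where "p1 = (\<lambda>r. r * rlap u r)"
  define p2 where "p2 = (\<lambda>r. r * rlap (rlap u) r)"
  define p3 where "p3 = (\<lambda>r. r * rlap (rlap (rlap u)) r)"
  have smp0: "Sm p0" unfolding p0_def by (intro Sm_mult Sm_id sm)
  have smp1: "Sm p1" using g1(5) p1_def by simp
  have smp2: "Sm p2" using g2(5) p2_def by simp
  have dd0: "deriv (deriv p0) = p1" using g1(1) p0_def p1_def by simp
  have dd1: "deriv (deriv p1) = p2" using g2(1) p1_def p2_def by simp
  have dd2: "deriv (deriv p2) = p3" using g3(1) p2_def p3_def by simp
  have p3N: "p3 = (\<lambda>r. - Nf u r)"
  proof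
    fix r :: real
    consider "r > 0" | "r = 0" | "r < 0" by linarith
    then show "p3 r = - Nf u r"
    proof cases
      case 1 then show ?thesis using ode[OF 1] by (simp add: p3_def Nf_def field_simps)
    next
      case 2 then show ?thesis by (simp add: p3_def Nf_def)
    next
      case 3
      then have "- r > 0" by simp
      from ode[OF this] have "rlap (rlap (rlap u)) (- r) = - 1 / (u r) ^ 3" using ev by simp
      then have "rlap (rlap (rlap u)) r = - 1 / (u r) ^ 3" using g3(4)[of r] by simp
      then show ?thesis using 3 by (simp add: p3_def Nf_def field_simps)
    qed
  qed
  define Dl where "Dl = [p0, deriv p0, p1, deriv p1, p2, deriv p2, p3]"
  define E where "E = (\<lambda>i r. (Dl ! i) r - Phi k e u i r)"
  have Dd: "((Dl ! i) has_real_derivative (Dl ! Suc i) x) (at x)" if "i < 6" for i x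
  proof -
    have "i = 0 \<or> i = 1 \<or> i = 2 \<or> i = 3 \<or> i = 4 \<or> i = 5" using that by auto
    moreover have "(p0 has_real_derivative deriv p0 x) (at x)" using Sm_DERIV[OF smp0] .
    moreover have "(deriv p0 has_real_derivative p1 x) (at x)" using Sm_DERIV[OF Sm_deriv[OF smp0]] dd0 by metis
    moreover have "(p1 has_real_derivative deriv p1 x) (at x)" using Sm_DERIV[OF smp1] .
    moreover have "(deriv p1 has_real_derivative p2 x) (at x)" using Sm_DERIV[OF Sm_deriv[OF smp1]] dd1 by metis
    moreover have "(p2 has_real_derivative deriv p2 x) (at x)" using Sm_DERIV[OF smp2] .
    moreover have "(deriv p2 has_real_derivative p3 x) (at x)" using Sm_DERIV[OF Sm_deriv[OF smp2]] dd2 by metis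
    ultimately show ?thesis by (elim disjE) (simp_all add: Dl_def numeral_eq_Suc)
  qed
  have Ed: "(E i has_real_derivative E (Suc i) x) (at x)" if "i < 6" for i x
    unfolding E_def using Dd[OF that] Phi_deriv[OF Nc that] by (auto intro!: derivative_intros)
  have E6: "E 6 x = 0" for x
    using p3N Phi_6[of k e u] by (simp add: E_def Dl_def numeral_eq_Suc)
  have D0: "p0 0 = 0" "deriv p0 0 = k" "p1 0 = 0" "deriv p1 0 = - e" "p2 0 = 0" "deriv p2 0 = 1"
  proof -
    show "p0 0 = 0" "p1 0 = 0" "p2 0 = 0" by (simp_all add: p0_def p1_def p2_def)
    show "deriv p0 0 = k" using deriv_times_x_0[OF sm] u0 p0_def by simp
    show "deriv p1 0 = - e" using g1(2) r1 p1_def by (metis Dv_def)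
    show "deriv p2 0 = 1" using g2(2) r2 p2_def by (metis Dv_def)
  qed
  have E0: "E i 0 = 0" if "i < 6" for i
  proof -
    have "i = 0 \<or> i = 1 \<or> i = 2 \<or> i = 3 \<or> i = 4 \<or> i = 5" using that by auto
    then show ?thesis using Phi_at0[OF that] Qs_0 D0
      by (elim disjE) (simp_all add: E_def Dl_def numeral_eq_Suc)
  qed
  have "E 0 x = 0" for x by (rule uniq_chain[of 6]) (use Ed E6 E0 in auto)
  then have pp: "p0 x = Phi k e u 0 x" for x by (simp add: E_def Dl_def)
  have fxp: "u r = Tm k e u r" for r
  proof (cases "r = 0")
    case True then show ?thesis using u0 by (simp add: Tm_def)
  next
    case False
    have "r * u r = Phi k e u 0 r" using pp[of r] p0_def by simp
    then show ?thesis using False by (simp add: Tm_def Phi_def Pk_def field_simps power_def)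
  qed
  show ?thesis unfolding sol_def using ev pos cont fxp by auto
qed

lemma AI_bound:
  assumes "continuous_on UNIV h" "\<And>s. \<bar>s\<bar> \<le> \<bar>x\<bar> \<Longrightarrow> \<bar>h s\<bar> \<le> C"
  shows "\<bar>AI h x\<bar> \<le> C * \<bar>x\<bar>"
proof (cases "0 \<le> x")
  case True
  have "norm (integral {0..x} h) \<le> C * (x - 0)"
    by (rule integral_bound) (use True assms in \<open>auto intro: continuous_on_subset\<close>)
  then show ?thesis using True by (simp add: AI_def)
next
  case False
  have "norm (integral {x..0} h) \<le> C * (0 - x)"
    by (rule integral_bound) (use False assms in \<open>auto intro: continuous_on_subset\<close>)
  then show ?thesis using False by (simp add: AI_def)
qed

lemma Nf_nonneg:
  assumes "\<And>s. 0 \<le> s \<Longrightarrow> 0 < u s" "0 \<le> s"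
  shows "0 \<le> Nf u s"
proof -
  have "0 < u s ^ 3" using assms by simp
  then show ?thesis using assms(2) by (simp add: Nf_def)
qed

lemma Tm_le_P:
  assumes "LI (Nf u)" "\<And>s. 0 \<le> s \<Longrightarrow> 0 < u s" "0 \<le> r"
  shows "Tm k e u r \<le> Pk k e r"
proof (cases "r = 0")
  case True then show ?thesis by (simp add: Tm_def Pk_def)
next
  case False
  have "0 \<le> (AI ^^ 6) (Nf u) r"
    by (rule AI_pow_nonneg[OF assms(1)]) (use assms Nf_nonneg in auto)
  then show ?thesis using False assms(3) by (simp add: Tm_def)
qed

lemma Tm_mono:
  assumes "LI (Nf u)" "LI (Nf v)" "\<And>s. 0 \<le> s \<Longrightarrow> 0 < u s" "\<And>s. 0 \<le> s \<Longrightarrow> u s \<le> v s" "0 \<le> r"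
  shows "Tm k e u r \<le> Tm k e v r"
proof (cases "r = 0")
  case True then show ?thesis by (simp add: Tm_def)
next
  case False
  have "Nf v s \<le> Nf u s" if "0 \<le> s" for s
  proof -
    have "0 < u s" "u s \<le> v s" using assms that by auto
    then have "(u s) ^ 3 \<le> (v s) ^ 3" "0 < (u s) ^ 3" "0 < (v s) ^ 3" by (auto intro: power_mono)
    then show ?thesis unfolding Nf_def using that by (intro divide_left_mono) (auto intro: mult_pos_pos)
  qed
  then have "(AI ^^ 6) (Nf v) r \<le> (AI ^^ 6) (Nf u) r"
    by (intro AI_pow_mono assms) auto
  then show ?thesis using False assms(5) by (simp add: Tm_def divide_right_mono)
qed

lemma Tm_mono_e:
  assumes "e1 \<le> e2"
  shows "Tm k e2 u r \<le> Tm k e1 u r"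
proof -
  have "e1 * r ^ 2 \<le> e2 * r ^ 2" using assms by (intro mult_right_mono) auto
  then show ?thesis by (simp add: Tm_def Pk_def)
qed

lemma LIM:
  assumes zc: "\<And>n. continuous_on UNIV (z n)"
    and lb: "\<And>R. \<exists>\<delta>>0. \<forall>n s. \<bar>s\<bar> \<le> R \<longrightarrow> \<delta> \<le> z n s"
    and zl: "\<And>r. (\<lambda>n. z n r) \<longlonglongrightarrow> zl r"
    and yl: "\<And>r. (\<lambda>n. Tm k (e n) (z n) r) \<longlonglongrightarrow> zl r"
    and el: "e \<longlonglongrightarrow> e0"
  shows "\<And>r. zl r = Tm k e0 zl r" and "LI (Nf zl)" and "\<And>r. 0 < zl r"
proof -
  have zlb: "\<exists>\<delta>>0. \<forall>s. \<bar>s\<bar> \<le> R \<longrightarrow> \<delta> \<le> zl s" for R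
  proof -
    obtain \<delta> where d: "\<delta> > 0" "\<And>n s. \<bar>s\<bar> \<le> R \<Longrightarrow> \<delta> \<le> z n s" using lb[of R] by blast
    have "\<delta> \<le> zl s" if "\<bar>s\<bar> \<le> R" for s
      using LIMSEQ_le_const[OF zl[of s]] d(2)[OF that] by blast
    then show ?thesis using d(1) by blast
  qed
  show pos: "\<And>r. 0 < zl r"
  proof -
    fix r
    obtain \<delta> where "\<delta> > 0" "\<forall>s. \<bar>s\<bar> \<le> \<bar>r\<bar> \<longrightarrow> \<delta> \<le> zl s" using zlb[of "\<bar>r\<bar>"] by blast
    then show "0 < zl r" by force
  qed
  have zpos: "\<And>n s. 0 < z n s"
  proof -
    fix n s
    obtain \<delta> where d: "\<delta> > 0" "\<forall>n t. \<bar>t\<bar> \<le> \<bar>s\<bar> \<longrightarrow> \<delta> \<le> z n t" using lb[of "\<bar>s\<bar>"] by blast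
    have "\<delta> \<le> z n s" using d(2) by simp
    then show "0 < z n s" using d(1) by simp
  qed
  have Nzc: "\<And>n. continuous_on UNIV (Nf (z n))"
    using Nf_cont zc zpos by (metis less_irrefl)
  define H where "H = (\<lambda>j n. (AI ^^ j) (Nf (z n)))"
  define Hl where "Hl = (\<lambda>j. (AI ^^ j) (Nf zl))"
  have Hc: "continuous_on UNIV (H j n)" for j n
  proof (cases j)
    case 0 then show ?thesis using Nzc by (simp add: H_def)
  next
    case (Suc i) then show ?thesis unfolding H_def using AI_pow_cont[OF LI_cont[OF Nzc]] by blast
  qed
  have main: "LI (Hl j) \<and> (\<forall>R. \<exists>C. \<forall>n x. \<bar>x\<bar> \<le> R \<longrightarrow> \<bar>H j n x\<bar> \<le> C) \<and>
      (\<forall>x. (\<lambda>n. H j n x) \<longlonglongrightarrow> Hl j x)" for j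
  proof (induction j)
    case 0
    have conv: "(\<lambda>n. H 0 n x) \<longlonglongrightarrow> Hl 0 x" for x
      unfolding H_def Hl_def Nf_def using pos[of x]
      by (auto intro!: tendsto_intros zl)
    have bnd: "\<exists>C. \<forall>n x. \<bar>x\<bar> \<le> R \<longrightarrow> \<bar>H 0 n x\<bar> \<le> C" for R
    proof -
      obtain \<delta> where d: "\<delta> > 0" "\<And>n s. \<bar>s\<bar> \<le> R \<Longrightarrow> \<delta> \<le> z n s" using lb[of R] by blast
      have "\<bar>H 0 n x\<bar> \<le> \<bar>R\<bar> / \<delta> ^ 3" if "\<bar>x\<bar> \<le> R" for n x
      proof -
        have "\<delta> ^ 3 \<le> (z n x) ^ 3" using d that by (intro power_mono) auto
        moreover have "0 < \<delta> ^ 3" using d by simp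
        ultimately have "\<bar>x\<bar> / (z n x) ^ 3 \<le> \<bar>R\<bar> / \<delta> ^ 3"
          using that by (intro frac_le) auto
        then show ?thesis using zpos[of n x] by (simp add: H_def Nf_def abs_divide)
      qed
      then show ?thesis by blast
    qed
    have li: "LI (Hl 0)" unfolding LI_def
    proof (intro allI)
      fix a b :: real
      obtain C where C: "\<And>n x. \<bar>x\<bar> \<le> \<bar>a\<bar> + \<bar>b\<bar> \<Longrightarrow> \<bar>H 0 n x\<bar> \<le> C"
        using bnd[of "\<bar>a\<bar> + \<bar>b\<bar>"] by blast
      show "Hl 0 integrable_on {a..b}"
      proof (rule dominated_convergence(1)[where f="\<lambda>n. H 0 n" and h="\<lambda>_. C"])
        show "\<And>n. H 0 n integrable_on {a..b}" using Hc by (meson integrable_continuous_real continuous_on_subset subset_UNIV)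
        show "(\<lambda>_. C) integrable_on {a..b}" by (rule integrable_const_ivl)
        show "\<And>n x. x \<in> {a..b} \<Longrightarrow> norm (H 0 n x) \<le> C" using C by auto
        show "\<And>x. x \<in> {a..b} \<Longrightarrow> (\<lambda>n. H 0 n x) \<longlonglongrightarrow> Hl 0 x" using conv by blast
      qed
    qed
    show ?case using li bnd conv by blast
  next
    case (Suc j)
    have liH: "LI (Hl j)" and bnd: "\<And>R. \<exists>C. \<forall>n x. \<bar>x\<bar> \<le> R \<longrightarrow> \<bar>H j n x\<bar> \<le> C"
      and conv: "\<And>x. (\<lambda>n. H j n x) \<longlonglongrightarrow> Hl j x" using Suc by blast+
    have HS: "H (Suc j) n = AI (H j n)" for n by (simp add: H_def)
    have HlS: "Hl (Suc j) = AI (Hl j)" by (simp add: Hl_def)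
    have li: "LI (Hl (Suc j))" unfolding HlS by (rule AI_LI[OF liH])
    have bnd2: "\<exists>C. \<forall>n x. \<bar>x\<bar> \<le> R \<longrightarrow> \<bar>H (Suc j) n x\<bar> \<le> C" for R
    proof -
      obtain C where C: "\<And>n x. \<bar>x\<bar> \<le> R \<Longrightarrow> \<bar>H j n x\<bar> \<le> C" using bnd[of R] by blast
      have "\<bar>H (Suc j) n x\<bar> \<le> \<bar>C\<bar> * \<bar>R\<bar>" if "\<bar>x\<bar> \<le> R" for n x
      proof -
        have "\<bar>AI (H j n) x\<bar> \<le> \<bar>C\<bar> * \<bar>x\<bar>"
          by (rule AI_bound[OF Hc]) (meson C that abs_ge_self order_trans)
        also have "\<dots> \<le> \<bar>C\<bar> * \<bar>R\<bar>" using that by (intro mult_left_mono) auto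
        finally show ?thesis by (simp add: HS)
      qed
      then show ?thesis by blast
    qed
    have conv2: "(\<lambda>n. H (Suc j) n x) \<longlonglongrightarrow> Hl (Suc j) x" for x
    proof -
      obtain C where C: "\<And>n y. \<bar>y\<bar> \<le> \<bar>x\<bar> \<Longrightarrow> \<bar>H j n y\<bar> \<le> C" using bnd[of "\<bar>x\<bar>"] by blast
      have dc: "(\<lambda>n. integral {a..b} (H j n)) \<longlonglongrightarrow> integral {a..b} (Hl j)"
        if "{a..b} \<subseteq> {-\<bar>x\<bar>..\<bar>x\<bar>}" for a b
      proof (rule dominated_convergence(2)[where h="\<lambda>_. C"])
        show "\<And>n. H j n integrable_on {a..b}" using Hc by (meson integrable_continuous_real continuous_on_subset subset_UNIV)
        show "(\<lambda>_. C) integrable_on {a..b}" by (rule integrable_const_ivl)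
        show "\<And>n y. y \<in> {a..b} \<Longrightarrow> norm (H j n y) \<le> C" using C that by force
        show "\<And>y. y \<in> {a..b} \<Longrightarrow> (\<lambda>n. H j n y) \<longlonglongrightarrow> Hl j y" using conv by blast
      qed
      show ?thesis
      proof (cases "0 \<le> x")
        case True
        have "(\<lambda>n. integral {0..x} (H j n)) \<longlonglongrightarrow> integral {0..x} (Hl j)" by (rule dc) auto
        then show ?thesis using True by (simp add: HS HlS AI_def)
      next
        case False
        have "(\<lambda>n. integral {x..0} (H j n)) \<longlonglongrightarrow> integral {x..0} (Hl j)" by (rule dc) auto
        then show ?thesis using False by (simp add: HS HlS AI_def tendsto_minus)
      qed
    qed
    show ?case using li bnd2 conv2 by blast
  qed
  show "LI (Nf zl)" using main[of 0] by (simp add: Hl_def)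
  show "zl r = Tm k e0 zl r" for r
  proof (cases "r = 0")
    case True
    have "(\<lambda>n. Tm k (e n) (z n) r) \<longlonglongrightarrow> k" using True by (simp add: Tm_def)
    then show ?thesis using LIMSEQ_unique[OF yl[of r]] True by (simp add: Tm_def)
  next
    case False
    have c6: "(\<lambda>n. H 6 n r) \<longlonglongrightarrow> Hl 6 r" using main[of 6] by blast
    have "(\<lambda>n. Pk k (e n) r - H 6 n r / r) \<longlonglongrightarrow> Pk k e0 r - Hl 6 r / r"
      unfolding Pk_def using False by (intro tendsto_intros el c6) auto
    then have "(\<lambda>n. Tm k (e n) (z n) r) \<longlonglongrightarrow> Tm k e0 zl r"
      using False by (simp add: Tm_def H_def Hl_def)
    then show ?thesis using LIMSEQ_unique[OF yl[of r]] by simp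
  qed
qed

definition it :: "real \<Rightarrow> real \<Rightarrow> nat \<Rightarrow> real \<Rightarrow> real" where
  "it k e n = ((Tm k e) ^^ n) (Pk k e)"

definition Umax :: "real \<Rightarrow> real \<Rightarrow> real \<Rightarrow> real" where
  "Umax k e r = lim (\<lambda>n. it k e n r)"

definition sub :: "real \<Rightarrow> real \<Rightarrow> (real \<Rightarrow> real) \<Rightarrow> bool" where
  "sub k e w = (continuous_on UNIV w \<and> (\<forall>r. w (- r) = w r) \<and> (\<forall>r. 0 < w r) \<and> (\<forall>r\<ge>0. w r \<le> Tm k e w r))"

lemma sol_sub: "sol k e u \<Longrightarrow> sub k e u"
  unfolding sol_def sub_def by auto

lemma even_le:
  fixes f g :: "real \<Rightarrow> real"
  assumes "\<And>r. f (- r) = f r" "\<And>r. g (- r) = g r" "\<And>r. 0 \<le> r \<Longrightarrow> f r \<le> g r"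
  shows "f r \<le> g r"
proof (cases "0 \<le> r")
  case True then show ?thesis using assms by auto
next
  case False
  then have "0 \<le> - r" by linarith
  then have "f (- r) \<le> g (- r)" using assms(3) by blast
  then show ?thesis using assms by simp
qed

lemma LI_pos: "continuous_on UNIV u \<Longrightarrow> (\<And>s. 0 < u s) \<Longrightarrow> LI (Nf u)"
  using Nf_cont LI_cont by (metis less_irrefl)

lemma it_Suc: "it k e (Suc n) = Tm k e (it k e n)"
  by (simp add: it_def)

lemma Pk_cont: "continuous_on UNIV (Pk k e)"
  unfolding Pk_def by (intro continuous_intros) auto

lemma it_props:
  assumes "sub k e w"
  shows "continuous_on UNIV (it k e n) \<and> (\<forall>r. it k e n (- r) = it k e n r) \<and> (\<forall>r. w r \<le> it k e n r)
    \<and> (\<forall>r\<ge>0. it k e (Suc n) r \<le> it k e n r)"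
proof (induction n)
  have wc: "continuous_on UNIV w" and wev: "\<And>r. w (- r) = w r" and wpos: "\<And>r. 0 < w r"
    and wsub: "\<And>r. 0 \<le> r \<Longrightarrow> w r \<le> Tm k e w r" using assms by (auto simp: sub_def)
  have wli: "LI (Nf w)" using LI_pos[OF wc wpos] .
  case 0
  have c: "continuous_on UNIV (it k e 0)" using Pk_cont by (simp add: it_def)
  have ev: "\<forall>r. it k e 0 (- r) = it k e 0 r" by (simp add: it_def Pk_def)
  have wle0: "w r \<le> Pk k e r" if "0 \<le> r" for r
    using wsub[OF that] Tm_le_P[OF wli _ that, of k e] wpos by force
  have wle: "\<forall>r. w r \<le> it k e 0 r"
    using even_le[of w "Pk k e"] wev wle0 by (simp add: it_def Pk_def)
  have ppos: "\<And>r. 0 < Pk k e r" using wle wpos by (metis it_def funpow_0 order_less_le_trans)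
  have "\<forall>r\<ge>0. it k e (Suc 0) r \<le> it k e 0 r"
    using Tm_le_P[OF LI_pos[OF Pk_cont ppos]] ppos by (simp add: it_def)
  then show ?case using c ev wle by blast
next
  have wc: "continuous_on UNIV w" and wev: "\<And>r. w (- r) = w r" and wpos: "\<And>r. 0 < w r"
    and wsub: "\<And>r. 0 \<le> r \<Longrightarrow> w r \<le> Tm k e w r" using assms by (auto simp: sub_def)
  have wli: "LI (Nf w)" using LI_pos[OF wc wpos] .
  case (Suc n)
  have c: "continuous_on UNIV (it k e n)" and ev: "\<And>r. it k e n (- r) = it k e n r"
    and wle: "\<And>r. w r \<le> it k e n r" and dec: "\<And>r. 0 \<le> r \<Longrightarrow> it k e (Suc n) r \<le> it k e n r"
    using Suc by auto
  have ipos: "\<And>r. 0 < it k e n r" using wle wpos by (metis order_less_le_trans)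
  have li: "LI (Nf (it k e n))" using LI_pos[OF c ipos] .
  have c1: "continuous_on UNIV (it k e (Suc n))" using Tm_cont[OF li] by (simp add: it_Suc)
  have ev1: "\<And>r. it k e (Suc n) (- r) = it k e (Suc n) r" using Tm_even[OF li ev] by (simp add: it_Suc)
  have wle1: "w r \<le> it k e (Suc n) r" for r
  proof (rule even_le[of w "it k e (Suc n)"])
    show "\<And>r. w (- r) = w r" by (rule wev)
    show "\<And>r. it k e (Suc n) (- r) = it k e (Suc n) r" by (rule ev1)
    fix r :: real assume r: "0 \<le> r"
    have "w r \<le> Tm k e w r" using wsub[OF r] .
    also have "\<dots> \<le> Tm k e (it k e n) r" using Tm_mono[OF wli li _ _ r] wpos wle by auto
    finally show "w r \<le> it k e (Suc n) r" by (simp add: it_Suc)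
  qed
  have ipos1: "\<And>r. 0 < it k e (Suc n) r" using wle1 wpos by (metis order_less_le_trans)
  have li1: "LI (Nf (it k e (Suc n)))" using LI_pos[OF c1 ipos1] .
  have dec1: "it k e (Suc (Suc n)) r \<le> it k e (Suc n) r" if "0 \<le> r" for r
    using Tm_mono[OF li1 li _ _ that] ipos1 dec by (simp add: it_Suc[of k e "Suc n"] it_Suc[of k e n])
  show ?case using c1 ev1 wle1 dec1 by blast
qed

lemma EX:
  assumes "sub k e w"
  shows "sol k e (Umax k e)" and "\<And>r. w r \<le> Umax k e r"
proof -
  have wc: "continuous_on UNIV w" and wpos: "\<And>r. 0 < w r"
    using assms by (auto simp: sub_def)
  note ip = it_props[OF assms]
  have conv: "(\<lambda>n. it k e n r) \<longlonglongrightarrow> Umax k e r" for r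
  proof -
    have ev: "it k e n (- r) = it k e n r" for n using ip by blast
    have "convergent (\<lambda>n. it k e n \<bar>r\<bar>)"
    proof -
      have "decseq (\<lambda>n. it k e n \<bar>r\<bar>)" using ip by (intro decseq_SucI) auto
      moreover have "\<forall>i. w \<bar>r\<bar> \<le> it k e i \<bar>r\<bar>" using ip by blast
      ultimately show ?thesis using decseq_convergent by (metis convergentI)
    qed
    moreover have "(\<lambda>n. it k e n \<bar>r\<bar>) = (\<lambda>n. it k e n r)"
      using ev by (cases "0 \<le> r") auto
    ultimately show ?thesis by (simp add: convergent_LIMSEQ_iff Umax_def)
  qed
  show wle: "\<And>r. w r \<le> Umax k e r"
    using conv ip by (meson LIMSEQ_le_const)
  have lb: "\<exists>\<delta>>0. \<forall>n s. \<bar>s\<bar> \<le> R \<longrightarrow> \<delta> \<le> it k e n s" for R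
  proof -
    have "\<exists>x\<in>{-\<bar>R\<bar>..\<bar>R\<bar>}. \<forall>y\<in>{-\<bar>R\<bar>..\<bar>R\<bar>}. w x \<le> w y"
      by (rule continuous_attains_inf) (auto intro: continuous_on_subset[OF wc])
    then obtain x where x: "\<And>y. y \<in> {-\<bar>R\<bar>..\<bar>R\<bar>} \<Longrightarrow> w x \<le> w y" by blast
    have "\<forall>n s. \<bar>s\<bar> \<le> R \<longrightarrow> w x \<le> it k e n s"
      using x ip by (meson abs_le_D1 abs_le_D2 abs_ge_self atLeastAtMost_iff minus_le_iff order_trans)
    then show ?thesis using wpos[of x] by blast
  qed
  have yl: "(\<lambda>n. Tm k e (it k e n) r) \<longlonglongrightarrow> Umax k e r" for r
    using LIMSEQ_Suc[OF conv[of r]] by (simp add: it_Suc)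
  note L = LIM[of "it k e" "Umax k e" k "\<lambda>_. e" e, OF _ lb conv yl tendsto_const]
  have ic: "\<And>n. continuous_on UNIV (it k e n)" using ip by blast
  have fx: "\<And>r. Umax k e r = Tm k e (Umax k e) r" and li: "LI (Nf (Umax k e))"
    and pos: "\<And>r. 0 < Umax k e r" using L ic by auto
  have ueq: "Umax k e = Tm k e (Umax k e)" using fx by auto
  have cont: "continuous_on UNIV (Umax k e)" using Tm_cont[OF li] ueq by metis
  have ev: "Umax k e (- r) = Umax k e r" for r
    using ip by (simp add: Umax_def)
  show "sol k e (Umax k e)" unfolding sol_def using ev pos cont fx by blast
qed

context
  fixes h :: "real \<Rightarrow> real"
  assumes hc: "continuous_on UNIV h" and hnn: "\<And>s. 0 \<le> s \<Longrightarrow> 0 \<le> h s"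
begin

lemma hLI: "LI h" using LI_cont[OF hc] .

lemma A_nn: "0 \<le> x \<Longrightarrow> 0 \<le> (AI ^^ j) h x"
  using AI_pow_nonneg[OF hLI hnn] by blast

lemma A_der: "((AI ^^ Suc j) h has_real_derivative (AI ^^ j) h x) (at x)"
  by (rule AI_pow_deriv[OF hc])

lemma A_incr:
  assumes "0 \<le> x" "x \<le> y"
  shows "(AI ^^ Suc j) h x \<le> (AI ^^ Suc j) h y"
  by (rule DERIV_nonneg_imp_nondecreasing[OF assms(2)]) (use A_der A_nn assms in force)

lemma A_le_x:
  assumes "0 \<le> x"
  shows "(AI ^^ Suc (Suc j)) h x \<le> x * (AI ^^ Suc j) h x"
proof -
  define G where "G = (\<lambda>y. y * (AI ^^ Suc j) h x - (AI ^^ Suc (Suc j)) h y)"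
  have "G 0 \<le> G x"
  proof (rule DERIV_nonneg_imp_nondecreasing[OF assms])
    fix y assume y: "0 \<le> y" "y \<le> x"
    have "(G has_real_derivative (AI ^^ Suc j) h x - (AI ^^ Suc j) h y) (at y)"
      unfolding G_def by (auto intro!: derivative_eq_intros A_der[of "Suc j"] simp del: funpow.simps)
    moreover have "0 \<le> (AI ^^ Suc j) h x - (AI ^^ Suc j) h y" using A_incr[OF y] by simp
    ultimately show "\<exists>d. (G has_real_derivative d) (at y) \<and> 0 \<le> d" by blast
  qed
  then show ?thesis by (simp add: G_def AI_pow_0 del: funpow.simps)
qed

lemma A_shift:
  assumes "0 \<le> x"
  shows "(AI ^^ Suc j) h x \<le> (AI ^^ Suc (Suc j)) h (x + 1)"
proof -
  define G where "G = (\<lambda>y. (AI ^^ Suc (Suc j)) h y - (y - x) * (AI ^^ Suc j) h x)"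
  have "G x \<le> G (x + 1)"
  proof (rule DERIV_nonneg_imp_nondecreasing[where f=G and a=x and b="x+1"])
    show "x \<le> x + 1" by simp
  next
    fix y assume y: "x \<le> y" "y \<le> x + 1"
    have "(G has_real_derivative (AI ^^ Suc j) h y - (AI ^^ Suc j) h x) (at y)"
      unfolding G_def by (auto intro!: derivative_eq_intros A_der[of "Suc j"] simp del: funpow.simps)
    moreover have "0 \<le> (AI ^^ Suc j) h y - (AI ^^ Suc j) h x" using A_incr[OF assms y(1)] by simp
    ultimately show "\<exists>d. (G has_real_derivative d) (at y) \<and> 0 \<le> d" by blast
  qed
  moreover have "0 \<le> (AI ^^ Suc (Suc j)) h x" using A_nn[OF assms] .
  ultimately show ?thesis by (simp add: G_def del: funpow.simps)
qed

lemma A_pow_le: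
  assumes "0 \<le> y" "y \<le> x"
  shows "(AI ^^ Suc j) h y \<le> y ^ j / fact j * AI h x"
  using assms
proof (induction j arbitrary: y)
  case 0
  then show ?case using A_incr[of y x 0] by simp
next
  case (Suc j)
  define c where "c = AI h x / fact (Suc j)"
  define G where "G = (\<lambda>t. t ^ Suc j * c - (AI ^^ Suc (Suc j)) h t)"
  have "G 0 \<le> G y"
  proof (rule DERIV_nonneg_imp_nondecreasing[OF Suc.prems(1)])
    fix t assume t: "0 \<le> t" "t \<le> y"
    have pw: "((\<lambda>t. t ^ Suc j) has_real_derivative real (Suc j) * t ^ j) (at t)"
      using DERIV_pow[of "Suc j" t] by simp
    have "(G has_real_derivative (real (Suc j) * t ^ j * c - (AI ^^ Suc j) h t)) (at t)"
      unfolding G_def by (rule DERIV_diff[OF DERIV_cmult_right[OF pw] A_der])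
    moreover have "real (Suc j) * t ^ j * c = t ^ j / fact j * AI h x"
      by (simp add: c_def fact_Suc field_simps del: of_nat_Suc)
    moreover have "(AI ^^ Suc j) h t \<le> t ^ j / fact j * AI h x"
      using Suc.IH[of t] t Suc.prems by simp
    ultimately show "\<exists>d. (G has_real_derivative d) (at t) \<and> 0 \<le> d" by force
  qed
  then show ?case by (simp add: G_def c_def AI_pow_0 del: funpow.simps)
qed

end

lemma Fd_test:
  fixes s :: real
  shows "((\<lambda>s. - 1 / (4 * (1 + s ^ 2) ^ 2)) has_real_derivative s / (1 + s ^ 2) ^ 3) (at s)"
proof -
  have p: "0 < 1 + s ^ 2" by (simp add: add_pos_nonneg)
  have f: "((\<lambda>x. - 1 / (4 * x ^ 2)) has_real_derivative 1 / (2 * x ^ 3)) (at x)" if "x \<noteq> 0" for x :: real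
  proof -
    have "((\<lambda>x. - 1 / 4 * inverse (x ^ 2)) has_real_derivative - 1 / 4 * (- ((real 2 * x ^ (2 - 1)) * inverse ((x ^ 2) ^ Suc (Suc 0))))) (at x)"
    proof -
      have pw: "((\<lambda>x. x ^ 2) has_real_derivative real 2 * x ^ (2 - 1)) (at x)" using DERIV_pow[of 2 x] by simp
      show ?thesis by (intro DERIV_cmult DERIV_inverse_fun[OF pw]) (use that in auto)
    qed
    moreover have "- 1 / 4 * (- ((real 2 * x ^ (2 - 1)) * inverse ((x ^ 2) ^ Suc (Suc 0)))) = 1 / (2 * x ^ 3)"
      using that by (simp add: field_simps power2_eq_square power3_eq_cube)
    moreover have "(\<lambda>x. - 1 / 4 * inverse (x ^ 2)) = (\<lambda>x::real. - 1 / (4 * x ^ 2))"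
      by (simp add: fun_eq_iff field_simps)
    ultimately show ?thesis by (simp add: ac_simps)
  qed
  have q: "((\<lambda>s. 1 + s ^ 2) has_real_derivative 2 * s) (at s)"
    by (auto intro!: derivative_eq_intros)
  have "((\<lambda>s. - 1 / (4 * (1 + s ^ 2) ^ 2)) has_real_derivative 1 / (2 * (1 + s ^ 2) ^ 3) * (2 * s)) (at s)"
    by (rule DERIV_chain2[OF f q]) (use p in auto)
  then show ?thesis by simp
qed


lemma poly_w:
  fixes r k :: real
  assumes k: "100 \<le> k"
  shows "1 + r ^ 2 \<le> k - 1 * r ^ 2 / 6 + r ^ 4 / 120 - r ^ 4 / 480"
proof -
  have "0 \<le> (r ^ 2 - 280 / 3) ^ 2" by simp
  then have "0 \<le> r ^ 4 - 560 / 3 * r ^ 2 + 78400 / 9" by (simp add: power2_eq_square power4_eq_xxxx algebra_simps)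
  then show ?thesis using k by linarith
qed

lemma sub_w:
  assumes k: "100 \<le> k"
  shows "sub k 1 (\<lambda>r. 1 + r ^ 2)"
proof -
  define w where "w = (\<lambda>r::real. 1 + r ^ 2)"
  have wpos: "\<And>r. 0 < w r" by (simp add: w_def add_pos_nonneg)
  have wc: "continuous_on UNIV w" unfolding w_def by (intro continuous_intros)
  have hc: "continuous_on UNIV (Nf w)" using Nf_cont[OF wc] wpos by (metis less_irrefl)
  have hnn: "\<And>s. 0 \<le> s \<Longrightarrow> 0 \<le> Nf w s" using Nf_nonneg wpos by blast
  have Fd: "((\<lambda>s. - 1 / (4 * (1 + s ^ 2) ^ 2)) has_real_derivative Nf w s) (at s)" for s
    using Fd_test[of s] by (simp add: Nf_def w_def)
  have AN: "AI (Nf w) r \<le> 1 / 4" for r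
  proof -
    have "AI (Nf w) r = - 1 / (4 * (1 + r ^ 2) ^ 2) - (- 1 / (4 * (1 + 0 ^ 2) ^ 2))"
      by (rule AI_FTC[OF Fd])
    moreover have "0 \<le> 1 / (4 * (1 + r ^ 2) ^ 2)" by simp
    ultimately show ?thesis by simp
  qed
  have main: "w r \<le> Tm k 1 w r" if r: "0 \<le> r" for r
  proof (cases "r = 0")
    case True then show ?thesis using k by (simp add: w_def Tm_def)
  next
    case False
    then have rp: "0 < r" using r by simp
    have "(AI ^^ Suc 5) (Nf w) r \<le> r ^ 5 / fact 5 * AI (Nf w) r"
      by (rule A_pow_le[OF hc hnn r order_refl])
    also have "\<dots> \<le> r ^ 5 / fact 5 * (1 / 4)"
      using AN rp by (intro mult_left_mono) auto
    finally have a6: "(AI ^^ 6) (Nf w) r \<le> r ^ 5 / 480"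
      by (simp add: fact_numeral numeral_eq_Suc del: funpow.simps)
    have "(AI ^^ 6) (Nf w) r / r \<le> (r ^ 5 / 480) / r"
      using a6 rp by (intro divide_right_mono) auto
    also have "\<dots> = r ^ 4 / 480" using rp by (simp add: power_eq_if field_simps)
    finally have a6r: "(AI ^^ 6) (Nf w) r / r \<le> r ^ 4 / 480" .
    have poly: "1 + r ^ 2 \<le> k - 1 * r ^ 2 / 6 + r ^ 4 / 120 - r ^ 4 / 480" by (rule poly_w[OF k])
    show ?thesis using a6r poly False by (simp add: w_def Tm_def Pk_def)
  qed
  show ?thesis unfolding sub_def w_def[symmetric] using wc wpos main
    by (auto simp: w_def)
qed

lemma two_c: "2 * (a::real) * (1 / (16 * b)) = a / (8 * b)"
  by (cases "b = 0") (simp_all add: field_simps)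

lemma LB:
  assumes su: "sol k e u" and e: "0 < e" and k: "0 < k" and r0: "0 \<le> r0" "r0 \<le> R"
  defines "B0 \<equiv> (R + 6) * (k + (R + 6) ^ 4 / 120)"
    and "L \<equiv> (R + 1) ^ 3 / 30 + 1"
  shows "min (1 / 2) (1 / (16 * L ^ 2 * B0)) \<le> u r0"
proof -
  have ev: "\<And>r. u (- r) = u r" and pos: "\<And>r. 0 < u r" and cont: "continuous_on UNIV u"
    and fxp: "\<And>r. u r = Tm k e u r" using su by (auto simp: sol_def)
  define h where "h = Nf u"
  have hc: "continuous_on UNIV h" unfolding h_def using Nf_cont[OF cont] pos by (metis less_irrefl)
  have hnn: "\<And>s. 0 \<le> s \<Longrightarrow> 0 \<le> h s" unfolding h_def using Nf_nonneg pos by blast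
  have R0: "0 \<le> R" using r0 by simp
  have A6eq: "(AI ^^ 6) h x = x * (Pk k e x - u x)" if "0 < x" for x
    using fxp[of x] that by (simp add: Tm_def h_def field_simps)
  have A6le: "(AI ^^ 6) h x \<le> x * (k + x ^ 4 / 120)" if "0 < x" for x
  proof -
    have "0 \<le> e * x ^ 2" using e by simp
    then have "Pk k e x - u x \<le> k + x ^ 4 / 120"
      using pos[of x] by (simp add: Pk_def)
    then show ?thesis using A6eq[OF that] that by (simp add: mult_left_mono)
  qed
  have sh: "\<And>j x. 0 \<le> x \<Longrightarrow> (AI ^^ Suc j) h x \<le> (AI ^^ Suc (Suc j)) h (x + 1)"
    using A_shift[OF hc hnn] by blast
  have B: "AI h (R + 1) \<le> B0"
  proof -
    have ch: "AI h (R + 1) \<le> (AI ^^ Suc j) h (R + 1 + real j)" for j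
    proof (induction j)
      case 0 then show ?case by simp
    next
      case (Suc j)
      have "(AI ^^ Suc j) h (R + 1 + real j) \<le> (AI ^^ Suc (Suc j)) h (R + 1 + real j + 1)"
        by (rule sh) (use R0 in simp)
      then show ?case using Suc by (simp add: add.assoc del: funpow.simps)
    qed
    have "AI h (R + 1) \<le> (AI ^^ 6) h (R + 6)" using ch[of 5] by (simp add: numeral_eq_Suc add.assoc)
    also have "\<dots> \<le> (R + 6) * (k + (R + 6) ^ 4 / 120)" using A6le[of "R + 6"] R0 by simp
    finally show ?thesis unfolding B0_def .
  qed
  have B0pos: "0 < B0"
  proof -
    have "0 < R + 6" using R0 by simp
    moreover have "0 < k + (R + 6) ^ 4 / 120" using k R0 by (simp add: add_pos_nonneg)
    ultimately show ?thesis unfolding B0_def by simp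
  qed
  have Lpos: "1 \<le> L" unfolding L_def using R0 by simp
  have Ah: "AI h x \<le> B0" if "0 \<le> x" "x \<le> R + 1" for x
    using A_incr[OF hc hnn that, of 0] B by simp
  have Ahnn: "0 \<le> AI h x" if "0 \<le> x" for x using A_nn[OF hc hnn that, of 1] by simp
  have ud: "(u has_real_derivative (- e * x / 3 + x ^ 3 / 30 - ((AI ^^ 5) h x * x - (AI ^^ 6) h x) / x ^ 2)) (at x)"
    if "0 < x" for x
  proof -
    have d6: "((AI ^^ Suc 5) h has_real_derivative (AI ^^ 5) h x) (at x)" by (rule A_der[OF hc hnn])
    have "((\<lambda>y. Pk k e y - (AI ^^ 6) h y / y) has_real_derivative
        (- e * x / 3 + x ^ 3 / 30 - ((AI ^^ 5) h x * x - (AI ^^ 6) h x) / x ^ 2)) (at x)"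
      unfolding Pk_def using that d6
      by (auto intro!: derivative_eq_intros simp del: funpow.simps simp: field_simps power2_eq_square power3_eq_cube numeral_eq_Suc)
    then show ?thesis
      by (rule has_field_derivative_transform_within_open[where S="{0<..}"])
         (use that fxp in \<open>auto simp: Tm_def h_def\<close>)
  qed
  have udle: "- e * x / 3 + x ^ 3 / 30 - ((AI ^^ 5) h x * x - (AI ^^ 6) h x) / x ^ 2 \<le> L"
    if "0 < x" "x \<le> R + 1" for x
  proof -
    have "(AI ^^ Suc (Suc 4)) h x \<le> x * (AI ^^ Suc 4) h x" using A_le_x[OF hc hnn, of x 4] that by simp
    then have "0 \<le> ((AI ^^ 5) h x * x - (AI ^^ 6) h x) / x ^ 2"
      using that by (simp add: numeral_eq_Suc algebra_simps del: funpow.simps)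
    moreover have "x ^ 3 \<le> (R + 1) ^ 3" using that by (intro power_mono) auto
    moreover have "0 \<le> e * x" using e that by simp
    ultimately show ?thesis unfolding L_def by simp
  qed
  define m where "m = u r0"
  have mpos: "0 < m" using pos m_def by simp
  have ule: "u s \<le> m + L * (s - r0)" if "r0 \<le> s" "s \<le> R + 1" for s
  proof -
    define f where "f = (\<lambda>y. m + L * (y - r0) - u y)"
    have "f r0 \<le> f s"
    proof (rule DERIV_nonneg_imp_increasing_open[OF that(1)])
      fix y assume y: "r0 < y" "y < s"
      have "(f has_real_derivative L - (- e * y / 3 + y ^ 3 / 30 - ((AI ^^ 5) h y * y - (AI ^^ 6) h y) / y ^ 2)) (at y)"
        unfolding f_def using ud[of y] y r0 by (auto intro!: derivative_eq_intros)
      moreover have "0 \<le> L - (- e * y / 3 + y ^ 3 / 30 - ((AI ^^ 5) h y * y - (AI ^^ 6) h y) / y ^ 2)"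
        using udle[of y] y r0 that by simp
      ultimately show "\<exists>d. (f has_real_derivative d) (at y) \<and> 0 \<le> d" by blast
    next
      show "continuous_on {r0..s} f" unfolding f_def
        by (intro continuous_intros continuous_on_subset[OF cont]) auto
    qed
    then show ?thesis by (simp add: f_def m_def)
  qed
  show ?thesis
  proof (cases "L / 2 \<le> m")
    case True
    then show ?thesis using Lpos m_def by simp
  next
    case False
    define \<tau> where "\<tau> = m / L"
    have tpos: "0 < \<tau>" using mpos Lpos by (simp add: \<tau>_def)
    have "m < L / 2" using False by simp
    then have "m / L < 1 / 2" using Lpos by (simp add: pos_divide_less_eq)
    then have tle: "\<tau> < 1 / 2" by (simp add: \<tau>_def)
    have Ltau: "L * \<tau> = m" using Lpos by (simp add: \<tau>_def)
    have hlow: "(y - r0) / (8 * m ^ 3) \<le> h y" if "r0 \<le> y" "y \<le> r0 + \<tau>" for y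
    proof -
      have u1: "u y \<le> m + L * (y - r0)" using ule[of y] that tle r0 by simp
      have "L * (y - r0) \<le> L * \<tau>" using that Lpos by (intro mult_left_mono) auto
      then have u2: "u y \<le> 2 * m" using u1 Ltau by linarith
      have "(u y) ^ 3 \<le> (2 * m) ^ 3" using pos[of y] u2 by (intro power_mono) auto
      then have u3: "(u y) ^ 3 \<le> 8 * m ^ 3" by simp
      have "(y - r0) / (8 * m ^ 3) \<le> (y - r0) / (u y) ^ 3"
        using u3 pos[of y] that mpos by (intro divide_left_mono) auto
      also have "\<dots> \<le> y / (u y) ^ 3" using pos[of y] r0 by (intro divide_right_mono) auto
      finally show ?thesis by (simp add: h_def Nf_def)
    qed
    define c where "c = 1 / (16 * m ^ 3)"
    define K where "K = (\<lambda>y. AI h y - (y - r0) ^ 2 * c)"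
    have "K r0 \<le> K (r0 + \<tau>)"
    proof (rule DERIV_nonneg_imp_nondecreasing[where f=K])
      show "r0 \<le> r0 + \<tau>" using tpos by simp
    next
      fix y assume y: "r0 \<le> y" "y \<le> r0 + \<tau>"
      have pw: "((\<lambda>y. (y - r0) ^ 2) has_real_derivative 2 * (y - r0)) (at y)"
        by (auto intro!: derivative_eq_intros)
      have d1: "(K has_real_derivative h y - 2 * (y - r0) * c) (at y)"
        unfolding K_def by (rule DERIV_diff[OF AI_deriv[OF hc] DERIV_cmult_right[OF pw]])
      have e1: "2 * (y - r0) * c = (y - r0) / (8 * m ^ 3)" unfolding c_def by (rule two_c)
      have "(K has_real_derivative h y - (y - r0) / (8 * m ^ 3)) (at y)" using d1 unfolding e1 .
      moreover have "0 \<le> h y - (y - r0) / (8 * m ^ 3)" using hlow[OF y] by simp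
      ultimately show "\<exists>d. (K has_real_derivative d) (at y) \<and> 0 \<le> d" by blast
    qed
    then have "\<tau> ^ 2 / (16 * m ^ 3) \<le> AI h (r0 + \<tau>) - AI h r0" by (simp add: K_def c_def)
    also have "\<dots> \<le> B0" using Ah[of "r0 + \<tau>"] Ahnn[OF r0(1)] r0 tpos tle by simp
    finally have t2: "\<tau> ^ 2 / (16 * m ^ 3) \<le> B0" .
    have "\<tau> ^ 2 / (16 * m ^ 3) = 1 / (16 * L ^ 2 * m)"
      using mpos Lpos by (simp add: \<tau>_def power2_eq_square power3_eq_cube)
    then have "1 / (16 * L ^ 2 * m) \<le> B0" using t2 by simp
    moreover have dp: "0 < 16 * L ^ 2 * m" using mpos Lpos by simp
    ultimately have "1 \<le> B0 * (16 * L ^ 2 * m)" by (simp add: divide_le_eq)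
    then have "1 \<le> m * (16 * L ^ 2 * B0)" by (simp add: ac_simps)
    moreover have "0 < 16 * L ^ 2 * B0" using B0pos Lpos by simp
    ultimately have "1 / (16 * L ^ 2 * B0) \<le> m" by (simp add: divide_le_eq)
    then show ?thesis using m_def by simp
  qed
qed

lemma sol_le_P: "sol k e u \<Longrightarrow> 0 \<le> r \<Longrightarrow> u r \<le> Pk k e r"
proof -
  assume su: "sol k e u" and r: "0 \<le> r"
  have pos: "\<And>s. 0 < u s" and cont: "continuous_on UNIV u" and fxp: "\<And>r. u r = Tm k e u r"
    using su by (auto simp: sol_def)
  have "Tm k e u r \<le> Pk k e r" by (rule Tm_le_P[OF LI_pos[OF cont pos] _ r]) (use pos in auto)
  then show ?thesis using fxp[of r] by simp
qed

lemma S_bound: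
  assumes k: "100 \<le> k" and es: "\<epsilon> \<in> S_set k"
  shows "\<epsilon> \<le> 2 * k"
proof (rule ccontr)
  assume "\<not> \<epsilon> \<le> 2 * k"
  then have big: "2 * k < \<epsilon>" by simp
  obtain u where u: "pos_entire_radial_sol k \<epsilon> u" and ep: "0 < \<epsilon>" using es by (auto simp: S_set_def)
  have su: "sol k \<epsilon> u" using BR2[OF u] .
  define r where "r = sqrt (10 * \<epsilon>)"
  have r0: "0 \<le> r" using ep by (simp add: r_def)
  have r2: "r ^ 2 = 10 * \<epsilon>" using ep by (simp add: r_def)
  have r4: "r ^ 4 = 100 * \<epsilon> ^ 2"
  proof -
    have "r ^ 4 = (r ^ 2) ^ 2" by simp
    then show ?thesis using r2 by (simp add: power2_eq_square)
  qed
  have "0 < u r" using su unfolding sol_def by blast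
  also have "u r \<le> Pk k \<epsilon> r" by (rule sol_le_P[OF su r0])
  also have "\<dots> = k - 5 / 6 * \<epsilon> ^ 2" unfolding Pk_def r2 r4 by (simp add: power2_eq_square)
  finally have "5 / 6 * \<epsilon> ^ 2 < k" by simp
  moreover have "4 * k * k < \<epsilon> ^ 2"
  proof -
    have "(2 * k) * (2 * k) < \<epsilon> * \<epsilon>" using big k by (intro mult_strict_mono) auto
    then show ?thesis by (simp add: power2_eq_square)
  qed
  ultimately have "5 / 6 * (4 * k * k) < k" by linarith
  moreover have "100 * k \<le> k * k" using mult_right_mono[OF k, of k] k by simp
  ultimately show False using k by linarith
qed

lemma S_down:
  assumes "\<epsilon>' \<in> S_set k" "0 < \<epsilon>" "\<epsilon> \<le> \<epsilon>'"
  shows "\<epsilon> \<in> S_set k"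
proof -
  obtain u where u: "pos_entire_radial_sol k \<epsilon>' u" using assms(1) by (auto simp: S_set_def)
  have su: "sol k \<epsilon>' u" using BR2[OF u] .
  have "sub k \<epsilon> u"
  proof -
    have "u r \<le> Tm k \<epsilon> u r" for r
    proof -
      have "u r = Tm k \<epsilon>' u r" using su unfolding sol_def by blast
      then show ?thesis using Tm_mono_e[OF assms(3), of k u r] by simp
    qed
    then show ?thesis using su unfolding sol_def sub_def by blast
  qed
  then have "sol k \<epsilon> (Umax k \<epsilon>)" by (rule EX(1))
  then show ?thesis using BR1 assms(2) by (auto simp: S_set_def)
qed

theorem lemma3:
  shows "\<exists>k0>0. \<forall>k\<ge>k0. S_set k \<noteq> {} \<and> bdd_above (S_set k) \<and>
           (\<exists>u. pos_entire_radial_sol k (Sup (S_set k)) u)"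
proof (intro exI[of _ 100] conjI allI impI)
  show "(0::real) < 100" by simp
  fix k :: real
  assume k: "100 \<le> k"
  have kpos: "0 < k" using k by simp
  have one: "1 \<in> S_set k"
  proof -
    have "sol k 1 (Umax k 1)" by (rule EX(1)[OF sub_w[OF k]])
    then show ?thesis using BR1 by (auto simp: S_set_def)
  qed
  show ne: "S_set k \<noteq> {}" using one by blast
  have bd: "\<And>x. x \<in> S_set k \<Longrightarrow> x \<le> 2 * k" using S_bound[OF k] by blast
  show bdd: "bdd_above (S_set k)" using bd by (auto simp: bdd_above_def)
  define es where "es = Sup (S_set k)"
  have es1: "1 \<le> es" unfolding es_def by (rule cSup_upper[OF one bdd])
  define e where "e = (\<lambda>n::nat. es * (1 - 1 / (real n + 2)))"
  have epos: "0 < e n" for n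
  proof -
    have "1 / (real n + 2) < 1" by simp
    then show ?thesis using es1 by (simp add: e_def)
  qed
  have eless: "e n < es" for n using es1 by (simp add: e_def)
  have eS: "e n \<in> S_set k" for n
  proof -
    have "e n < Sup (S_set k)" using eless es_def by simp
    then obtain x where "x \<in> S_set k" "e n < x" using less_cSup_iff[OF ne bdd] by blast
    then show ?thesis using S_down epos by (meson less_imp_le)
  qed
  have emono: "e n \<le> e (Suc n)" for n
  proof -
    have "1 / (real (Suc n) + 2) \<le> 1 / (real n + 2)" by (simp add: frac_le)
    then show ?thesis using es1 by (simp add: e_def)
  qed
  have elim: "e \<longlonglongrightarrow> es"
  proof -
    have "(\<lambda>n. 1 / (real n + 2)) \<longlonglongrightarrow> 0"
    proof -
      have "(\<lambda>n. 1 / (real (n + 2))) \<longlonglongrightarrow> 0"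
        using LIMSEQ_ignore_initial_segment[OF lim_1_over_n, of 2] by simp
      then show ?thesis by (simp add: add.commute)
    qed
    then have "(\<lambda>n. es * (1 - 1 / (real n + 2))) \<longlonglongrightarrow> es * (1 - 0)"
      by (intro tendsto_intros)
    then show ?thesis by (simp add: e_def)
  qed
  define U where "U = (\<lambda>n. Umax k (e n))"
  have solU: "sol k (e n) (U n)" for n
  proof -
    obtain u where "pos_entire_radial_sol k (e n) u" using eS[of n] by (auto simp: S_set_def)
    then have "sub k (e n) u" using BR2 sol_sub by blast
    then show ?thesis unfolding U_def by (rule EX(1))
  qed
  have Udec: "U (Suc n) r \<le> U n r" for n r
  proof -
    have "sub k (e n) (U (Suc n))"
    proof -
      have su: "sol k (e (Suc n)) (U (Suc n))" by (rule solU)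
      have "U (Suc n) r \<le> Tm k (e n) (U (Suc n)) r" for r
      proof -
        have "U (Suc n) r = Tm k (e (Suc n)) (U (Suc n)) r" using su unfolding sol_def by blast
        then show ?thesis using Tm_mono_e[OF emono[of n], of k "U (Suc n)" r] by simp
      qed
      then show ?thesis using su unfolding sol_def sub_def by blast
    qed
    then show ?thesis unfolding U_def by (rule EX(2))
  qed
  have Upos: "0 < U n r" for n r using solU unfolding sol_def by blast
  have Uev: "U n (- r) = U n r" for n r using solU unfolding sol_def by blast
  define Ul where "Ul = (\<lambda>r. lim (\<lambda>n. U n r))"
  have conv: "(\<lambda>n. U n r) \<longlonglongrightarrow> Ul r" for r
  proof -
    have "decseq (\<lambda>n. U n r)" using Udec by (intro decseq_SucI) auto
    moreover have "\<forall>i. 0 \<le> U i r" using Upos less_imp_le by blast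
    ultimately have "convergent (\<lambda>n. U n r)" using decseq_convergent by (metis convergentI)
    then show ?thesis by (simp add: convergent_LIMSEQ_iff Ul_def)
  qed
  have lb: "\<exists>\<delta>>0. \<forall>n s. \<bar>s\<bar> \<le> R \<longrightarrow> \<delta> \<le> U n s" for R
  proof -
    define R' where "R' = \<bar>R\<bar>"
    define B0 where "B0 = (R' + 6) * (k + (R' + 6) ^ 4 / 120)"
    define L where "L = (R' + 1) ^ 3 / 30 + 1"
    define \<delta> where "\<delta> = min (1 / 2) (1 / (16 * L ^ 2 * B0))"
    have B0p: "0 < B0"
    proof -
      have "0 < R' + 6" by (simp add: R'_def add_nonneg_pos)
      moreover have "0 < k + (R' + 6) ^ 4 / 120" using kpos by (simp add: R'_def add_pos_nonneg)
      ultimately show ?thesis unfolding B0_def by simp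
    qed
    have Lp: "0 < L" unfolding L_def R'_def by (simp add: add_nonneg_pos)
    have dp: "0 < \<delta>" unfolding \<delta>_def using B0p Lp by simp
    have "\<delta> \<le> U n s" if "\<bar>s\<bar> \<le> R" for n s
    proof -
      have "\<delta> \<le> U n \<bar>s\<bar>"
        unfolding \<delta>_def L_def B0_def
        by (rule LB[OF solU epos kpos]) (use that in \<open>auto simp: R'_def\<close>)
      moreover have "U n \<bar>s\<bar> = U n s" using Uev by (cases "0 \<le> s") auto
      ultimately show ?thesis by simp
    qed
    then show ?thesis using dp by blast
  qed
  have Uc: "continuous_on UNIV (U n)" for n using solU unfolding sol_def by blast
  have yl: "(\<lambda>n. Tm k (e n) (U n) r) \<longlonglongrightarrow> Ul r" for r
  proof -
    have "Tm k (e n) (U n) r = U n r" for n using solU[of n] unfolding sol_def by metis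
    then show ?thesis using conv by simp
  qed
  note L = LIM[of U Ul k e es, OF Uc lb conv yl elim]
  have fx: "\<And>r. Ul r = Tm k es Ul r" and li: "LI (Nf Ul)" and pos: "\<And>r. 0 < Ul r" using L by auto
  have ueq: "Ul = Tm k es Ul" using fx by auto
  have cont: "continuous_on UNIV Ul" using Tm_cont[OF li] ueq by metis
  have ev: "Ul (- r) = Ul r" for r using Uev by (simp add: Ul_def)
  have "sol k es Ul" unfolding sol_def using ev pos cont fx by blast
  then have "pos_entire_radial_sol k es Ul" by (rule BR1)
  then show "\<exists>u. pos_entire_radial_sol k (Sup (S_set k)) u" using es_def by blast
qed

end
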